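(* Let $n\ge 1$ and let $\gamma_{n,k}^S$ be the integers defined by $$\sum_{\pi\in\mathfrak{S}_n(2413,3142)}t^{\mathrm{des}(\pi)}=\sum_{k=0}^{\lfloor\frac{n-1}{2}\rfloor}\gamma_{n,k}^S\, t^k (1+t)^{n-1-2k}.$$ Then for $0\le k\le\lfloor (n-1)/2\rfloor$, $\gamma_{n,k}^S=|\mathfrak{D}\mathfrak{T}_{n,k}^{1}|$, where $$\mathfrak{D}\mathfrak{T}_{n,k}^{1} :=\{T\in\mathfrak{D}\mathfrak{T}_n : r_{o}(T)=n-1-2k \text{ and every right chain of odd length in $T$ has first node labelled }\oplus \}.$$
   Context: $\mathfrak{S}_n(2413,3142)$ is the set of permutations of $[n]$ avoiding the patterns $2413$ and $3142$; $\mathrm{des}(\pi)=\#\{i\in[n-1]:\pi_i>\pi_{i+1}\}$. (The integers $\gamma^S_{n,k}$ are uniquely determined, this polynomial being palindromic of darga $n-1$.) A binary tree is either empty or consists of a root with a left and a right subtree, both binary trees. A right chain is a maximal sequence of nodes $v_1,\dots,v_l$ with $v_1$ the root or a left child and each $v_{j+1}$ the right child of $v_j$; $l$ is its length and $v_1$ its first node. $r_o(T)$ is the number of right chains of odd length in $T$. A di-sk tree is a binary tree with nodes labelled $\oplus$ or $\ominus$ such that labels alternate along every right chain; $\mathfrak{D}\mathfrak{T}_n$ is the set of di-sk trees with $n-1$ nodes. *)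

theory Defs
  imports "HOL-Library.Tree" "HOL-Computational_Algebra.Polynomial"
begin

definition perms :: "nat \<Rightarrow> nat list set" where
  "perms n = {p. distinct p \<and> set p = {1..n}}"

definition contains_2413 :: "nat list \<Rightarrow> bool" where
  "contains_2413 p \<longleftrightarrow> (\<exists>a b c d. a < b \<and> b < c \<and> c < d \<and> d < length p \<and>
      p!c < p!a \<and> p!a < p!d \<and> p!d < p!b)"

definition contains_3142 :: "nat list \<Rightarrow> bool" where
  "contains_3142 p \<longleftrightarrow> (\<exists>a b c d. a < b \<and> b < c \<and> c < d \<and> d < length p \<and>
      p!b < p!d \<and> p!d < p!a \<and> p!a < p!c)"

definition sep_perms :: "nat \<Rightarrow> nat list set" where
  "sep_perms n = {p \<in> perms n. \<not> contains_2413 p \<and> \<not> contains_3142 p}"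

definition des :: "nat list \<Rightarrow> nat" where
  "des p = card {i. Suc i < length p \<and> p!i > p!(Suc i)}"

text \<open>Labels: True = \<oplus>, False = \<ominus>. Trees from HOL-Library.Tree;
  size t is the number of nodes.\<close>

fun chain_labels :: "'a tree \<Rightarrow> 'a list" where
  "chain_labels Leaf = []"
| "chain_labels (Node l x r) = x # chain_labels r"

text \<open>Right chains (as label lists) whose first node is a left child somewhere in t.\<close>
fun lchains :: "'a tree \<Rightarrow> 'a list list" where
  "lchains Leaf = []"
| "lchains (Node l x r) =
     (if l = Leaf then [] else [chain_labels l]) @ lchains l @ lchains r"

definition right_chains :: "'a tree \<Rightarrow> 'a list list" where
  "right_chains t = (if t = Leaf then [] else [chain_labels t]) @ lchains t"

definition alternating :: "bool list \<Rightarrow> bool" where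
  "alternating c \<longleftrightarrow> (\<forall>i. Suc i < length c \<longrightarrow> c!i \<noteq> c!(Suc i))"

definition is_disk :: "bool tree \<Rightarrow> bool" where
  "is_disk t \<longleftrightarrow> (\<forall>c \<in> set (right_chains t). alternating c)"

definition r_o :: "'a tree \<Rightarrow> nat" where
  "r_o t = length (filter (\<lambda>c. odd (length c)) (right_chains t))"

definition DT :: "nat \<Rightarrow> bool tree set" where
  "DT n = {t. size t = n - 1 \<and> is_disk t}"

definition DT1 :: "nat \<Rightarrow> nat \<Rightarrow> bool tree set" where
  "DT1 n k = {t \<in> DT n. r_o t = n - 1 - 2 * k \<and>
      (\<forall>c \<in> set (right_chains t). odd (length c) \<longrightarrow> hd c = True)}"

end

theory Submission
  imports Defs
begin


definition avoid :: "nat list \<Rightarrow> bool" where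
  "avoid p \<longleftrightarrow> \<not> contains_2413 p \<and> \<not> contains_3142 p"

lemma c2413_appL: "contains_2413 xs \<Longrightarrow> contains_2413 (xs @ ys)"
  unfolding contains_2413_def
  by (elim exE conjE, rule_tac x=a in exI, rule_tac x=b in exI, rule_tac x=c in exI, rule_tac x=d in exI)
     (simp add: nth_append)

lemma c3142_appL: "contains_3142 xs \<Longrightarrow> contains_3142 (xs @ ys)"
  unfolding contains_3142_def
  by (elim exE conjE, rule_tac x=a in exI, rule_tac x=b in exI, rule_tac x=c in exI, rule_tac x=d in exI)
     (simp add: nth_append)

lemma c2413_appR: "contains_2413 ys \<Longrightarrow> contains_2413 (xs @ ys)"
  unfolding contains_2413_def
  by (elim exE conjE, rule_tac x="a + length xs" in exI, rule_tac x="b + length xs" in exI,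
      rule_tac x="c + length xs" in exI, rule_tac x="d + length xs" in exI)
     (simp add: nth_append)

lemma c3142_appR: "contains_3142 ys \<Longrightarrow> contains_3142 (xs @ ys)"
  unfolding contains_3142_def
  by (elim exE conjE, rule_tac x="a + length xs" in exI, rule_tac x="b + length xs" in exI,
      rule_tac x="c + length xs" in exI, rule_tac x="d + length xs" in exI)
     (simp add: nth_append)

lemma avoid_appL: "avoid (xs @ ys) \<Longrightarrow> avoid xs"
  using c2413_appL c3142_appL by (auto simp: avoid_def)
lemma avoid_appR: "avoid (xs @ ys) \<Longrightarrow> avoid ys"
  using c2413_appR c3142_appR by (auto simp: avoid_def)

lemma c2413_map:
  assumes "\<forall>a\<in>set xs. \<forall>b\<in>set xs. f a < f b \<longleftrightarrow> a < b"
  shows "contains_2413 (map f xs) \<longleftrightarrow> contains_2413 xs"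
proof -
  have h: "\<And>i j. i < length xs \<Longrightarrow> j < length xs \<Longrightarrow> f (xs!i) < f (xs!j) \<longleftrightarrow> xs!i < xs!j"
    using assms by (meson nth_mem)
  show ?thesis unfolding contains_2413_def
    by (rule iffI; elim exE conjE; rule_tac x=a in exI, rule_tac x=b in exI, rule_tac x=c in exI, rule_tac x=d in exI)
       (auto simp: h)
qed

lemma c3142_map:
  assumes "\<forall>a\<in>set xs. \<forall>b\<in>set xs. f a < f b \<longleftrightarrow> a < b"
  shows "contains_3142 (map f xs) \<longleftrightarrow> contains_3142 xs"
proof -
  have h: "\<And>i j. i < length xs \<Longrightarrow> j < length xs \<Longrightarrow> f (xs!i) < f (xs!j) \<longleftrightarrow> xs!i < xs!j"
    using assms by (meson nth_mem)
  show ?thesis unfolding contains_3142_def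
    by (rule iffI; elim exE conjE; rule_tac x=a in exI, rule_tac x=b in exI, rule_tac x=c in exI, rule_tac x=d in exI)
       (auto simp: h)
qed

lemma avoid_map:
  assumes "\<forall>a\<in>set xs. \<forall>b\<in>set xs. f a < f b \<longleftrightarrow> a < b"
  shows "avoid (map f xs) \<longleftrightarrow> avoid xs"
  using c2413_map[OF assms] c3142_map[OF assms] by (simp add: avoid_def)

lemma c2413_rev_map:
  assumes "\<forall>a\<in>set xs. \<forall>b\<in>set xs. f a < f b \<longleftrightarrow> b < a"
  shows "contains_2413 (map f xs) \<longleftrightarrow> contains_3142 xs"
proof -
  have h: "\<And>i j. i < length xs \<Longrightarrow> j < length xs \<Longrightarrow> f (xs!i) < f (xs!j) \<longleftrightarrow> xs!j < xs!i"
    using assms by (meson nth_mem)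
  show ?thesis unfolding contains_2413_def contains_3142_def
    by (rule iffI; elim exE conjE; rule_tac x=a in exI, rule_tac x=b in exI, rule_tac x=c in exI, rule_tac x=d in exI)
       (auto simp: h)
qed

lemma c3142_rev_map:
  assumes "\<forall>a\<in>set xs. \<forall>b\<in>set xs. f a < f b \<longleftrightarrow> b < a"
  shows "contains_3142 (map f xs) \<longleftrightarrow> contains_2413 xs"
proof -
  have h: "\<And>i j. i < length xs \<Longrightarrow> j < length xs \<Longrightarrow> f (xs!i) < f (xs!j) \<longleftrightarrow> xs!j < xs!i"
    using assms by (meson nth_mem)
  show ?thesis unfolding contains_2413_def contains_3142_def
    by (rule iffI; elim exE conjE; rule_tac x=a in exI, rule_tac x=b in exI, rule_tac x=c in exI, rule_tac x=d in exI)
       (auto simp: h)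
qed

lemma avoid_rev_map:
  assumes "\<forall>a\<in>set xs. \<forall>b\<in>set xs. f a < f b \<longleftrightarrow> b < a"
  shows "avoid (map f xs) \<longleftrightarrow> avoid xs"
  using c2413_rev_map[OF assms] c3142_rev_map[OF assms] by (auto simp: avoid_def)


lemma c2413_split:
  assumes "contains_2413 (xs @ ys)"
  shows "contains_2413 xs \<or> contains_2413 ys \<or> (\<exists>a b c d. a < b \<and> b < c \<and> c < d \<and> d < length (xs @ ys) \<and>
      a < length xs \<and> length xs \<le> d \<and>
      (xs@ys)!c < (xs@ys)!a \<and> (xs@ys)!a < (xs@ys)!d \<and> (xs@ys)!d < (xs@ys)!b)"
proof -
  obtain a b c d where h: "a < b" "b < c" "c < d" "d < length (xs @ ys)"
    "(xs@ys)!c < (xs@ys)!a" "(xs@ys)!a < (xs@ys)!d" "(xs@ys)!d < (xs@ys)!b"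
    using assms unfolding contains_2413_def by blast
  consider "d < length xs" | "length xs \<le> a" | "a < length xs \<and> length xs \<le> d" by linarith
  then show ?thesis
  proof cases
    case 1
    then have "contains_2413 xs" unfolding contains_2413_def using h
      by (rule_tac x=a in exI, rule_tac x=b in exI, rule_tac x=c in exI, rule_tac x=d in exI) (simp add: nth_append)
    then show ?thesis by blast
  next
    case 2
    then have "contains_2413 ys" unfolding contains_2413_def using h
      by (rule_tac x="a - length xs" in exI, rule_tac x="b - length xs" in exI, rule_tac x="c - length xs" in exI,
          rule_tac x="d - length xs" in exI) (simp add: nth_append, linarith)
    then show ?thesis by blast
  next
    case 3 then show ?thesis using h by blast
  qed
qed

lemma c3142_split:
  assumes "contains_3142 (xs @ ys)"
  shows "contains_3142 xs \<or> contains_3142 ys \<or> (\<exists>a b c d. a < b \<and> b < c \<and> c < d \<and> d < length (xs @ ys) \<and>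
      a < length xs \<and> length xs \<le> d \<and>
      (xs@ys)!b < (xs@ys)!d \<and> (xs@ys)!d < (xs@ys)!a \<and> (xs@ys)!a < (xs@ys)!c)"
proof -
  obtain a b c d where h: "a < b" "b < c" "c < d" "d < length (xs @ ys)"
    "(xs@ys)!b < (xs@ys)!d" "(xs@ys)!d < (xs@ys)!a" "(xs@ys)!a < (xs@ys)!c"
    using assms unfolding contains_3142_def by blast
  consider "d < length xs" | "length xs \<le> a" | "a < length xs \<and> length xs \<le> d" by linarith
  then show ?thesis
  proof cases
    case 1
    then have "contains_3142 xs" unfolding contains_3142_def using h
      by (rule_tac x=a in exI, rule_tac x=b in exI, rule_tac x=c in exI, rule_tac x=d in exI) (simp add: nth_append)
    then show ?thesis by blast
  next
    case 2
    then have "contains_3142 ys" unfolding contains_3142_def using h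
      by (rule_tac x="a - length xs" in exI, rule_tac x="b - length xs" in exI, rule_tac x="c - length xs" in exI,
          rule_tac x="d - length xs" in exI) (simp add: nth_append, linarith)
    then show ?thesis by blast
  next
    case 3 then show ?thesis using h by blast
  qed
qed

lemma app_lt_nth:
  assumes "\<forall>x\<in>set xs. \<forall>y\<in>set ys. x < y" "i < length xs" "length xs \<le> j" "j < length (xs @ ys)"
  shows "(xs @ ys) ! i < (xs @ ys) ! j"
  using assms by (simp add: nth_append)

lemma app_gt_nth:
  assumes "\<forall>x\<in>set xs. \<forall>y\<in>set ys. x > y" "i < length xs" "length xs \<le> j" "j < length (xs @ ys)"
  shows "(xs @ ys) ! i > (xs @ ys) ! j"
  using assms by (simp add: nth_append)

lemma avoid_app_lt:
  assumes lt: "\<forall>x\<in>set xs. \<forall>y\<in>set ys. x < y" and "avoid xs" "avoid ys"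
  shows "avoid (xs @ ys)"
proof -
  note L = app_lt_nth[OF lt]
  have "\<not> contains_2413 (xs @ ys)"
  proof
    assume "contains_2413 (xs @ ys)"
    with c2413_split assms(2,3) obtain a b c d where h: "a < b" "b < c" "c < d" "d < length (xs @ ys)"
      "a < length xs" "length xs \<le> d"
      "(xs@ys)!c < (xs@ys)!a" "(xs@ys)!a < (xs@ys)!d" "(xs@ys)!d < (xs@ys)!b"
      unfolding avoid_def by blast
    show False
    proof (cases "c < length xs")
      case True
      then show False using L[of b d] h by linarith
    next
      case False
      then show False using L[of a c] h by linarith
    qed
  qed
  moreover have "\<not> contains_3142 (xs @ ys)"
  proof
    assume "contains_3142 (xs @ ys)"
    with c3142_split assms(2,3) obtain a b c d where h: "a < b" "b < c" "c < d" "d < length (xs @ ys)"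
      "a < length xs" "length xs \<le> d"
      "(xs@ys)!b < (xs@ys)!d" "(xs@ys)!d < (xs@ys)!a" "(xs@ys)!a < (xs@ys)!c"
      unfolding avoid_def by blast
    show False using L[of a d] h by linarith
  qed
  ultimately show ?thesis by (simp add: avoid_def)
qed

lemma avoid_app_gt:
  assumes gt: "\<forall>x\<in>set xs. \<forall>y\<in>set ys. x > y" and "avoid xs" "avoid ys"
  shows "avoid (xs @ ys)"
proof -
  note L = app_gt_nth[OF gt]
  have "\<not> contains_2413 (xs @ ys)"
  proof
    assume "contains_2413 (xs @ ys)"
    with c2413_split assms(2,3) obtain a b c d where h: "a < b" "b < c" "c < d" "d < length (xs @ ys)"
      "a < length xs" "length xs \<le> d"
      "(xs@ys)!c < (xs@ys)!a" "(xs@ys)!a < (xs@ys)!d" "(xs@ys)!d < (xs@ys)!b"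
      unfolding avoid_def by blast
    show False using L[of a d] h by linarith
  qed
  moreover have "\<not> contains_3142 (xs @ ys)"
  proof
    assume "contains_3142 (xs @ ys)"
    with c3142_split assms(2,3) obtain a b c d where h: "a < b" "b < c" "c < d" "d < length (xs @ ys)"
      "a < length xs" "length xs \<le> d"
      "(xs@ys)!b < (xs@ys)!d" "(xs@ys)!d < (xs@ys)!a" "(xs@ys)!a < (xs@ys)!c"
      unfolding avoid_def by blast
    show False
    proof (cases "b < length xs")
      case True
      then show False using L[of b d] h by linarith
    next
      case False
      then show False using L[of a c] h by linarith
    qed
  qed
  ultimately show ?thesis by (simp add: avoid_def)
qed


definition pdec_at :: "nat \<Rightarrow> nat list \<Rightarrow> bool" where
  "pdec_at s p \<longleftrightarrow> 0 < s \<and> s < length p \<and> (\<forall>i j. i < s \<longrightarrow> s \<le> j \<longrightarrow> j < length p \<longrightarrow> p!i < p!j)"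
definition mdec_at :: "nat \<Rightarrow> nat list \<Rightarrow> bool" where
  "mdec_at s p \<longleftrightarrow> 0 < s \<and> s < length p \<and> (\<forall>i j. i < s \<longrightarrow> s \<le> j \<longrightarrow> j < length p \<longrightarrow> p!i > p!j)"
definition pdec :: "nat list \<Rightarrow> bool" where "pdec p \<longleftrightarrow> (\<exists>s. pdec_at s p)"
definition mdec :: "nat list \<Rightarrow> bool" where "mdec p \<longleftrightarrow> (\<exists>s. mdec_at s p)"

lemma not_pdec_and_mdec: "pdec p \<Longrightarrow> \<not> mdec p"
proof
  assume "pdec p" "mdec p"
  then obtain s t where s: "pdec_at s p" and t: "mdec_at t p" unfolding pdec_def mdec_def by blast
  have "p!0 < p!(length p - 1)" using s unfolding pdec_at_def by auto
  moreover have "p!0 > p!(length p - 1)" using t unfolding mdec_at_def by auto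
  ultimately show False by simp
qed

lemma caseC:
  assumes dist: "distinct p" and len: "3 \<le> length p" and av: "avoid p" and pq: "pdec (butlast p)"
  shows "pdec p \<or> mdec p"
proof -
  define n where "n = length p"
  define x where "x = p ! (n - 1)"
  have bl: "butlast p ! i = p ! i" if "i < n - 1" for i using that by (simp add: nth_butlast n_def)
  obtain s where s: "pdec_at s (butlast p)" using pq unfolding pdec_def by blast
  have s1: "0 < s" "s < n - 1" using s unfolding pdec_at_def n_def by auto
  have sp: "p!i < p!j" if "i < s" "s \<le> j" "j < n - 1" for i j
    using s that unfolding pdec_at_def by (auto simp: bl n_def)
  have neq: "p!i \<noteq> p!j" if "i \<noteq> j" "i < n" "j < n" for i j
    using dist that by (simp add: nth_eq_iff_index_eq n_def)
  have nx: "p!i \<noteq> x" if "i < n - 1" for i using neq[of i "n-1"] that len by (simp add: x_def n_def)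
  show ?thesis
  proof (cases "\<forall>i<s. p!i < x")
    case True
    have "pdec_at s p" unfolding pdec_at_def
    proof (intro conjI allI impI)
      fix i j assume "i < s" "s \<le> j" "j < length p"
      then show "p!i < p!j" using True sp[of i j] by (cases "j = n - 1") (auto simp: x_def n_def)
    qed (use s1 n_def in auto)
    then show ?thesis unfolding pdec_def by blast
  next
    case F1: False
    then obtain i0 where i0: "i0 < s" "\<not> p!i0 < x" by blast
    then have i0x: "p!i0 > x" using nx[of i0] s1 by auto
    show ?thesis
    proof (cases "\<forall>i<n-1. p!i > x")
      case True
      have "mdec_at (n-1) p" unfolding mdec_at_def
      proof (intro conjI allI impI)
        fix i j assume "i < n - 1" "n - 1 \<le> j" "j < length p"
        then have "j = n - 1" "i < n - 1" by (auto simp: n_def)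
        then show "p!i > p!j" using True by (auto simp: x_def)
      qed (use len n_def in auto)
      then show ?thesis unfolding mdec_def by blast
    next
      case F2: False
      then obtain i1 where i1: "i1 < n - 1" "\<not> p!i1 > x" by blast
      then have i1x: "p!i1 < x" using nx[of i1] by auto
      have i1s: "i1 < s"
      proof (rule ccontr)
        assume "\<not> i1 < s"
        then have "p!i0 < p!i1" using sp[of i0 i1] i0 i1 by auto
        then show False using i0x i1x by simp
      qed
      show ?thesis
      proof (cases "\<exists>i i'. i < i' \<and> i' < s \<and> p!i > x \<and> p!i' < x")
        case True
        then obtain i i' where ii: "i < i'" "i' < s" "p!i > x" "p!i' < x" by blast
        have "contains_3142 p" unfolding contains_3142_def
          apply (rule exI[of _ i], rule exI[of _ i'], rule exI[of _ s], rule exI[of _ "n-1"])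
          using ii s1 sp[of i s] by (auto simp: x_def n_def)
        then show ?thesis using av unfolding avoid_def by blast
      next
        case F3: False
        define t where "t = (LEAST i. p!i > x)"
        have tx: "p!t > x" unfolding t_def by (rule LeastI[of _ i0]) (rule i0x)
        have tle: "t \<le> i0" unfolding t_def by (rule Least_le) (rule i0x)
        have below: "\<not> p!i > x" if "i < t" for i using not_less_Least[of i "\<lambda>i. p!i > x"] that t_def by blast
        have t0: "0 < t"
        proof (rule ccontr)
          assume "\<not> 0 < t"
          then have "t = 0" by simp
          have "i1 \<noteq> t" using i1x tx by auto
          then have "t < i1" using \<open>t = 0\<close> by simp
          then show False using F3 i1s tx i1x by blast
        qed
        have "pdec_at t p" unfolding pdec_at_def
        proof (intro conjI allI impI)
          show "0 < t" by (rule t0)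
          show "t < length p" using tle i0 s1 n_def by simp
          fix i j assume ij: "i < t" "t \<le> j" "j < length p"
          have pix: "p!i < x" using below[OF ij(1)] nx[of i] ij tle i0 s1 by force
          show "p!i < p!j"
          proof (cases "j < s")
            case True
            have "p!j > x"
            proof (cases "j = t")
              case True then show ?thesis using tx by simp
            next
              case False
              then have "t < j" using ij by simp
              moreover have "p!j \<noteq> x" using nx[of j] True s1 by simp
              ultimately show ?thesis using F3 True tx by (meson linorder_neqE_nat)
            qed
            then show ?thesis using pix by simp
          next
            case False
            show ?thesis
            proof (cases "j = n - 1")
              case True then show ?thesis using pix x_def by simp
            next
              case False2: False
              then show ?thesis using sp[of i j] False ij tle i0 n_def by simp
            qed
          qed
        qed
        then show ?thesis unfolding pdec_def by blast
      qed
    qed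
  qed
qed

lemma pdec_at_rev_map:
  assumes "\<forall>a\<in>set q. \<forall>b\<in>set q. f a < f b \<longleftrightarrow> b < a"
  shows "pdec_at s (map f q) \<longleftrightarrow> mdec_at s q" "mdec_at s (map f q) \<longleftrightarrow> pdec_at s q"
proof -
  have h: "\<And>i j. i < length q \<Longrightarrow> j < length q \<Longrightarrow> f (q!i) < f (q!j) \<longleftrightarrow> q!j < q!i"
    using assms by (meson nth_mem)
  show "pdec_at s (map f q) \<longleftrightarrow> mdec_at s q"
    unfolding pdec_at_def mdec_at_def by (auto simp: h)
  show "mdec_at s (map f q) \<longleftrightarrow> pdec_at s q"
    unfolding pdec_at_def mdec_at_def by (auto simp: h)
qed

lemma exhaust: "distinct p \<Longrightarrow> avoid p \<Longrightarrow> 2 \<le> length p \<Longrightarrow> pdec p \<or> mdec p"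
proof (induction "length p" arbitrary: p rule: less_induct)
  case less
  show ?case
  proof (cases "length p = 2")
    case True
    then obtain a b where p: "p = [a, b]"
      by (metis (no_types, opaque_lifting) One_nat_def Suc_1 length_0_conv length_Suc_conv)
    have "a \<noteq> b" using less.prems p by simp
    then show ?thesis unfolding pdec_def mdec_def pdec_at_def mdec_at_def p
      by (cases "a < b") (auto intro!: exI[of _ 1] simp: less_Suc_eq nth_Cons')
  next
    case False
    then have len: "3 \<le> length p" using less.prems by simp
    have pe: "p = butlast p @ [last p]" using len by (metis append_butlast_last_id list.size(3) not_numeral_le_zero)
    have dq: "distinct (butlast p)" using less.prems by (simp add: distinct_butlast)
    have aq: "avoid (butlast p)" using less.prems(2) pe by (metis avoid_appL)
    have IH: "pdec (butlast p) \<or> mdec (butlast p)" using less.hyps[of "butlast p"] dq aq len by simp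
    show ?thesis
    proof (cases "pdec (butlast p)")
      case True then show ?thesis using caseC less.prems len by blast
    next
      case False
      then have mq: "mdec (butlast p)" using IH by blast
      define K where "K = Suc (Max (set p))"
      define f where "f = (\<lambda>v::nat. K - v)"
      have le: "v < K" if "v \<in> set p" for v using that by (simp add: K_def le_imp_less_Suc)
      have rev: "\<forall>a\<in>set p. \<forall>b\<in>set p. f a < f b \<longleftrightarrow> b < a"
      proof (intro ballI)
        fix a b assume "a \<in> set p" "b \<in> set p"
        then have "a < K" "b < K" using le by auto
        then show "f a < f b \<longleftrightarrow> b < a" by (auto simp: f_def)
      qed
      have rev': "\<forall>a\<in>set (butlast p). \<forall>b\<in>set (butlast p). f a < f b \<longleftrightarrow> b < a"
        using rev by (meson in_set_butlastD)
      have d2: "distinct (map f p)" using less.prems(1) rev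
        by (simp add: distinct_map inj_on_def) (metis less_irrefl nat_neq_iff)
      have a2: "avoid (map f p)" using avoid_rev_map[OF rev] less.prems by simp
      have "pdec (butlast (map f p))" using mq pdec_at_rev_map[OF rev'] unfolding pdec_def mdec_def map_butlast by simp
      then have "pdec (map f p) \<or> mdec (map f p)" using caseC[OF d2 _ a2] len by simp
      then show ?thesis using pdec_at_rev_map[OF rev] unfolding pdec_def mdec_def by blast
    qed
  qed
qed


lemma des_Cons: "des (x # xs) = (if xs \<noteq> [] \<and> hd xs < x then 1 else 0) + des xs"
proof -
  let ?D = "{i. Suc i < length xs \<and> xs!i > xs!(Suc i)}"
  have eq: "{i. Suc i < length (x # xs) \<and> (x#xs)!i > (x#xs)!(Suc i)} =
     (if xs \<noteq> [] \<and> hd xs < x then {0} else {}) \<union> Suc ` ?D"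
  proof (rule set_eqI)
    fix i show "i \<in> {i. Suc i < length (x # xs) \<and> (x#xs)!i > (x#xs)!(Suc i)} \<longleftrightarrow>
       i \<in> (if xs \<noteq> [] \<and> hd xs < x then {0} else {}) \<union> Suc ` ?D"
      by (cases i) (auto simp: hd_conv_nth)
  qed
  have fin: "finite ?D" by (rule finite_subset[of _ "{..<length xs}"]) auto
  have "card ((if xs \<noteq> [] \<and> hd xs < x then {0} else {}) \<union> Suc ` ?D) =
     card (if xs \<noteq> [] \<and> hd xs < x then {0::nat} else {}) + card (Suc ` ?D)"
    by (rule card_Un_disjoint) (use fin in auto)
  then show ?thesis unfolding des_def eq by (simp add: card_image)
qed

lemma des_Nil[simp]: "des [] = 0" by (simp add: des_def)

lemma des_append: "xs \<noteq> [] \<Longrightarrow> ys \<noteq> [] \<Longrightarrow> des (xs @ ys) = des xs + des ys + (if hd ys < last xs then 1 else 0)"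
proof (induction xs)
  case Nil then show ?case by simp
next
  case (Cons x xs)
  show ?case
  proof (cases "xs = []")
    case True then show ?thesis using Cons by (simp add: des_Cons)
  next
    case False
    then show ?thesis using Cons by (simp add: des_Cons)
  qed
qed

lemma des_map: "\<forall>a\<in>set xs. \<forall>b\<in>set xs. f a < f b \<longleftrightarrow> a < b \<Longrightarrow> des (map f xs) = des xs"
proof (induction xs)
  case Nil then show ?case by simp
next
  case (Cons x xs)
  then show ?case by (cases xs) (auto simp: des_Cons)
qed

lemma perm_len: "p \<in> perms n \<Longrightarrow> length p = n"
  unfolding perms_def by (metis (mono_tags) card_atLeastAtMost diff_Suc_1 distinct_card mem_Collect_eq)

lemma finite_perms: "finite (perms n)"
proof (rule finite_subset)
  show "perms n \<subseteq> {xs. set xs \<subseteq> {1..n} \<and> length xs = n}" using perm_len by (auto simp: perms_def)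
  show "finite {xs. set xs \<subseteq> {1..n} \<and> length xs = n}" by (rule finite_lists_length_eq) simp
qed

lemma sep_eq: "sep_perms n = {p \<in> perms n. avoid p}" by (simp add: sep_perms_def avoid_def)

lemma finite_sep: "finite (sep_perms n)" using finite_perms by (simp add: sep_eq)

definition pls :: "nat list \<Rightarrow> nat list \<Rightarrow> nat list" where
  "pls a b = a @ map (\<lambda>v. v + length a) b"
definition mns :: "nat list \<Rightarrow> nat list \<Rightarrow> nat list" where
  "mns a b = map (\<lambda>v. v + length b) a @ b"

lemma shift_set: "(\<lambda>v. v + i) ` {1..j} = {i+1..i+j::nat}"
proof -
  have "(\<lambda>v. v + i) ` {1..j} = (+) i ` {1..j}" by (simp add: add.commute)
  also have "\<dots> = {i+1..i+j}" by (simp add: image_add_atLeastAtMost)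
  finally show ?thesis .
qed

lemma plus_perm: assumes "a \<in> perms i" "b \<in> perms j" shows "pls a b \<in> perms (i + j)"
proof -
  have la: "length a = i" using assms perm_len by blast
  have sa: "set a = {1..i}" "distinct a" and sb: "set b = {1..j}" "distinct b" using assms by (auto simp: perms_def)
  have "set (map (\<lambda>v. v + i) b) = {i+1..i+j}" using sb shift_set by simp
  moreover have "distinct (map (\<lambda>v. v + i) b)" using sb by (simp add: distinct_map inj_on_def)
  ultimately show ?thesis using sa unfolding pls_def perms_def la by auto
qed

lemma minus_perm: assumes "a \<in> perms i" "b \<in> perms j" shows "mns a b \<in> perms (i + j)"
proof -
  have lb: "length b = j" using assms perm_len by blast
  have sa: "set a = {1..i}" "distinct a" and sb: "set b = {1..j}" "distinct b" using assms by (auto simp: perms_def)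
  have "set (map (\<lambda>v. v + j) a) = {j+1..j+i}" using sa shift_set by simp
  moreover have "distinct (map (\<lambda>v. v + j) a)" using sa by (simp add: distinct_map inj_on_def)
  ultimately show ?thesis using sb unfolding mns_def perms_def lb by auto
qed

lemma plus_avoid: assumes "a \<in> perms i" "b \<in> perms j" "avoid a" "avoid b" shows "avoid (pls a b)"
proof -
  have la: "length a = i" using assms perm_len by blast
  have sa: "set a = {1..i}" and sb: "set b = {1..j}" using assms by (auto simp: perms_def)
  show ?thesis unfolding pls_def
  proof (rule avoid_app_lt)
    show "\<forall>x\<in>set a. \<forall>y\<in>set (map (\<lambda>v. v + length a) b). x < y" using sa sb la by auto
    show "avoid (map (\<lambda>v. v + length a) b)" using assms(4) by (subst avoid_map) auto
  qed (rule assms(3))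
qed

lemma minus_avoid: assumes "a \<in> perms i" "b \<in> perms j" "avoid a" "avoid b" shows "avoid (mns a b)"
proof -
  have lb: "length b = j" using assms perm_len by blast
  have sa: "set a = {1..i}" and sb: "set b = {1..j}" using assms by (auto simp: perms_def)
  show ?thesis unfolding mns_def
  proof (rule avoid_app_gt)
    show "\<forall>x\<in>set (map (\<lambda>v. v + length b) a). \<forall>y\<in>set b. x > y" using sa sb lb by auto
    show "avoid (map (\<lambda>v. v + length b) a)" using assms(3) by (subst avoid_map) auto
  qed (rule assms(4))
qed

lemma plus_pdec_at: assumes "a \<in> perms i" "b \<in> perms j" "1 \<le> i" "1 \<le> j" shows "pdec_at i (pls a b)"
proof -
  have la: "length a = i" and lb: "length b = j" using assms perm_len by blast+
  have sa: "set a = {1..i}" and sb: "set b = {1..j}" using assms by (auto simp: perms_def)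
  show ?thesis unfolding pdec_at_def
  proof (intro conjI allI impI)
    fix k l assume kl: "k < i" "i \<le> l" "l < length (pls a b)"
    have "pls a b ! k = a ! k" using kl la by (simp add: pls_def nth_append)
    moreover have "a ! k \<in> {1..i}" using kl la sa nth_mem by blast
    moreover have "pls a b ! l = b ! (l - i) + i" using kl la lb by (simp add: pls_def nth_append)
    moreover have "l - i < length b" using kl la lb by (simp add: pls_def)
    then have "b ! (l - i) \<in> {1..j}" using sb nth_mem by blast
    ultimately show "pls a b ! k < pls a b ! l" by auto
  qed (use assms la lb in \<open>auto simp: pls_def\<close>)
qed

lemma minus_mdec_at: assumes "a \<in> perms i" "b \<in> perms j" "1 \<le> i" "1 \<le> j" shows "mdec_at i (mns a b)"
proof -
  have la: "length a = i" and lb: "length b = j" using assms perm_len by blast+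
  have sa: "set a = {1..i}" and sb: "set b = {1..j}" using assms by (auto simp: perms_def)
  show ?thesis unfolding mdec_at_def
  proof (intro conjI allI impI)
    fix k l assume kl: "k < i" "i \<le> l" "l < length (mns a b)"
    have "mns a b ! k = a ! k + j" using kl la lb by (simp add: mns_def nth_append)
    moreover have "a ! k \<in> {1..i}" using kl la sa nth_mem by blast
    moreover have "mns a b ! l = b ! (l - i)" using kl la lb by (simp add: mns_def nth_append)
    moreover have "l - i < length b" using kl la lb by (simp add: mns_def)
    then have "b ! (l - i) \<in> {1..j}" using sb nth_mem by blast
    ultimately show "mns a b ! k > mns a b ! l" by auto
  qed (use assms la lb in \<open>auto simp: mns_def\<close>)
qed

lemma plus_des: assumes "a \<in> perms i" "b \<in> perms j" "1 \<le> i" "1 \<le> j" shows "des (pls a b) = des a + des b"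
proof -
  have la: "length a = i" and lb: "length b = j" using assms perm_len by blast+
  have sa: "set a = {1..i}" and sb: "set b = {1..j}" using assms by (auto simp: perms_def)
  have ne: "a \<noteq> []" "b \<noteq> []" using la lb assms by auto
  have "last a \<in> {1..i}" using ne sa last_in_set by blast
  moreover have "hd b \<in> {1..j}" using ne sb hd_in_set by blast
  ultimately have "\<not> hd (map (\<lambda>v. v + length a) b) < last a" using ne la by (simp add: hd_map)
  moreover have "des (map (\<lambda>v. v + length a) b) = des b" by (rule des_map) auto
  ultimately show ?thesis unfolding pls_def using ne by (simp add: des_append)
qed

lemma minus_des: assumes "a \<in> perms i" "b \<in> perms j" "1 \<le> i" "1 \<le> j" shows "des (mns a b) = des a + des b + 1"
proof -
  have la: "length a = i" and lb: "length b = j" using assms perm_len by blast+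
  have sa: "set a = {1..i}" and sb: "set b = {1..j}" using assms by (auto simp: perms_def)
  have ne: "a \<noteq> []" "b \<noteq> []" using la lb assms by auto
  have "last a \<in> {1..i}" using ne sa last_in_set by blast
  moreover have "hd b \<in> {1..j}" using ne sb hd_in_set by blast
  ultimately have "hd b < last (map (\<lambda>v. v + length b) a)" using ne lb by (simp add: last_map)
  moreover have "des (map (\<lambda>v. v + length b) a) = des a" by (rule des_map) auto
  ultimately show ?thesis unfolding mns_def using ne by (simp add: des_append)
qed


lemma low_block:
  assumes U: "A \<union> B = {1..n::nat}" and D: "A \<inter> B = {}" and lt: "\<forall>a\<in>A. \<forall>b\<in>B. a < b"
  shows "A = {1..card A}"
proof -
  have fin: "finite A" using U by (metis finite_Un finite_atLeastAtMost)
  have sub: "A \<subseteq> {1..card A}"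
  proof
    fix v assume v: "v \<in> A"
    then have v1: "1 \<le> v" "v \<le> n" using U by auto
    have "{1..v} \<subseteq> A"
    proof
      fix w assume w: "w \<in> {1..v}"
      then have "w \<in> A \<union> B" using U v1 by auto
      moreover have "w \<notin> B" using lt v w by fastforce
      ultimately show "w \<in> A" by blast
    qed
    then have "card {1..v} \<le> card A" using card_mono[OF fin] by blast
    then show "v \<in> {1..card A}" using v1 by simp
  qed
  show ?thesis by (rule card_subset_eq[OF _ sub]) simp_all
qed

lemma take_drop_lt:
  assumes "pdec_at s p" "x \<in> set (take s p)" "y \<in> set (drop s p)" shows "x < y"
proof -
  obtain i where i: "i < length (take s p)" "x = take s p ! i" using assms(2) by (auto simp: in_set_conv_nth)
  obtain k where k: "k < length (drop s p)" "y = drop s p ! k" using assms(3) by (auto simp: in_set_conv_nth)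
  have "x = p ! i" "i < s" using i by auto
  moreover have "y = p ! (s + k)" "s + k < length p" using k assms(1) by (auto simp: pdec_at_def)
  ultimately show ?thesis using assms(1) unfolding pdec_at_def by auto
qed

lemma take_drop_gt:
  assumes "mdec_at s p" "x \<in> set (take s p)" "y \<in> set (drop s p)" shows "x > y"
proof -
  obtain i where i: "i < length (take s p)" "x = take s p ! i" using assms(2) by (auto simp: in_set_conv_nth)
  obtain k where k: "k < length (drop s p)" "y = drop s p ! k" using assms(3) by (auto simp: in_set_conv_nth)
  have "x = p ! i" "i < s" using i by auto
  moreover have "y = p ! (s + k)" "s + k < length p" using k assms(1) by (auto simp: mdec_at_def)
  ultimately show ?thesis using assms(1) unfolding mdec_at_def by auto
qed

lemma pdec_decomp:
  assumes p: "p \<in> sep_perms n" and pd: "pdec p"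
  shows "\<exists>s a b. s \<in> {1..<n} \<and> a \<in> sep_perms s \<and> b \<in> sep_perms (n - s) \<and> \<not> pdec b \<and> p = pls a b"
proof -
  have pp: "distinct p" "set p = {1..n}" "avoid p" using p by (auto simp: sep_eq perms_def)
  have lp: "length p = n" using p perm_len by (auto simp: sep_eq)
  define s where "s = (GREATEST s. pdec_at s p)"
  have bnd: "\<forall>y. pdec_at y p \<longrightarrow> y \<le> n" using lp by (auto simp: pdec_at_def)
  obtain s0 where s0: "pdec_at s0 p" using pd unfolding pdec_def by blast
  have ps: "pdec_at s p" unfolding s_def by (rule GreatestI_nat[where P="\<lambda>s. pdec_at s p", OF s0]) (use bnd in auto)
  have smax: "t \<le> s" if "pdec_at t p" for t unfolding s_def by (rule Greatest_le_nat[where P="\<lambda>s. pdec_at s p", OF that]) (use bnd in auto)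
  have s1: "1 \<le> s" "s < n" using ps lp by (auto simp: pdec_at_def)
  define a where "a = take s p"
  define b where "b = map (\<lambda>v. v - s) (drop s p)"
  have U: "set (take s p) \<union> set (drop s p) = {1..n}" using pp by (metis set_append append_take_drop_id)
  have D: "set (take s p) \<inter> set (drop s p) = {}" using pp set_take_disj_set_drop_if_distinct by blast
  have ct: "card (set (take s p)) = s" using pp s1 lp by (simp add: distinct_card)
  have sa: "set (take s p) = {1..s}" using low_block[OF U D] take_drop_lt[OF ps] ct by metis
  have "set (drop s p) = {1..n} - {1..s}" using U D sa by blast
  also have "\<dots> = {s+1..n}" using s1 by auto
  finally have sd: "set (drop s p) = {s+1..n}" .
  have ge: "v > s" if "v \<in> set (drop s p)" for v using sd that by auto
  have apm: "a \<in> perms s" using sa pp unfolding a_def perms_def by simp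
  have sb: "set b = {1..n-s}"
  proof -
    have "set b = (\<lambda>v. v - s) ` {s+1..n}" unfolding b_def using sd by simp
    also have "\<dots> = {1..n-s}"
    proof
      show "(\<lambda>v. v - s) ` {s+1..n} \<subseteq> {1..n-s}" by auto
      show "{1..n-s} \<subseteq> (\<lambda>v. v - s) ` {s+1..n}"
      proof
        fix w assume "w \<in> {1..n-s}"
        then show "w \<in> (\<lambda>v. v - s) ` {s+1..n}" by (intro image_eqI[of _ _ "w + s"]) auto
      qed
    qed
    finally show ?thesis .
  qed
  have db: "distinct b" unfolding b_def using pp ge
    by (auto simp: distinct_map inj_on_def intro: distinct_drop) (metis diff_add_inverse2 less_imp_le_nat le_add_diff_inverse2)
  have bpm: "b \<in> perms (n - s)" using sb db by (simp add: perms_def)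
  have pe: "p = take s p @ drop s p" by simp
  have aa: "avoid a" unfolding a_def using pp(3) pe avoid_appL by metis
  have ad: "avoid (drop s p)" using pp(3) pe avoid_appR by metis
  have ab: "avoid b" unfolding b_def using ad
  proof (subst avoid_map)
    show "\<forall>x\<in>set (drop s p). \<forall>y\<in>set (drop s p). (x - s < y - s) = (x < y)"
    proof (intro ballI)
      fix x y assume "x \<in> set (drop s p)" "y \<in> set (drop s p)"
      then have "x > s" "y > s" using ge by auto
      then show "(x - s < y - s) = (x < y)" by auto
    qed
  qed
  have lb: "length b = n - s" using bpm perm_len by blast
  have bnth: "b ! k = p ! (s + k) - s" if "k < n - s" for k using that lp unfolding b_def by simp
  have bge: "p ! (s + k) > s" if "k < n - s" for k
    using ge[of "p ! (s + k)"] that lp by (metis add_diff_cancel_left' in_set_conv_nth length_drop nth_drop s1(2) le_less)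
  have npb: "\<not> pdec b"
  proof
    assume "pdec b"
    then obtain t where t: "pdec_at t b" unfolding pdec_def by blast
    have "pdec_at (s + t) p" unfolding pdec_at_def
    proof (intro conjI allI impI)
      show "0 < s + t" using s1 by simp
      show "s + t < length p" using t lb lp s1 by (auto simp: pdec_at_def)
      fix i j assume ij: "i < s + t" "s + t \<le> j" "j < length p"
      show "p ! i < p ! j"
      proof (cases "i < s")
        case True then show ?thesis using ps ij unfolding pdec_at_def by auto
      next
        case False
        then have "b ! (i - s) < b ! (j - s)" using t ij lb lp unfolding pdec_at_def by auto
        then show ?thesis using bnth[of "i - s"] bnth[of "j - s"] bge[of "i - s"] bge[of "j - s"] ij lp False
          by auto
      qed
    qed
    then have "s + t \<le> s" by (rule smax)
    then show False using t by (simp add: pdec_at_def)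
  qed
  have "pls a b = p"
  proof -
    have la: "length a = s" unfolding a_def using s1 lp by simp
    have "map (\<lambda>v. v + s) b = drop s p" unfolding b_def map_map
    proof (rule map_idI)
      fix x assume "x \<in> set (drop s p)"
      then have "x > s" by (rule ge)
      then show "((\<lambda>v. v + s) \<circ> (\<lambda>v. v - s)) x = x" by simp
    qed
    then show ?thesis unfolding pls_def la by (simp add: a_def)
  qed
  then show ?thesis using s1 apm bpm aa ab npb
    by (intro exI[of _ s] exI[of _ a] exI[of _ b]) (auto simp: sep_eq)
qed


lemma mdec_decomp:
  assumes p: "p \<in> sep_perms n" and pd: "mdec p"
  shows "\<exists>s a b. s \<in> {1..<n} \<and> a \<in> sep_perms s \<and> b \<in> sep_perms (n - s) \<and> \<not> mdec b \<and> p = mns a b"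
proof -
  have pp: "distinct p" "set p = {1..n}" "avoid p" using p by (auto simp: sep_eq perms_def)
  have lp: "length p = n" using p perm_len by (auto simp: sep_eq)
  define s where "s = (GREATEST s. mdec_at s p)"
  have bnd: "\<forall>y. mdec_at y p \<longrightarrow> y \<le> n" using lp by (auto simp: mdec_at_def)
  obtain s0 where s0: "mdec_at s0 p" using pd unfolding mdec_def by blast
  have ps: "mdec_at s p" unfolding s_def by (rule GreatestI_nat[where P="\<lambda>s. mdec_at s p", OF s0]) (use bnd in auto)
  have smax: "t \<le> s" if "mdec_at t p" for t unfolding s_def by (rule Greatest_le_nat[where P="\<lambda>s. mdec_at s p", OF that]) (use bnd in auto)
  have s1: "1 \<le> s" "s < n" using ps lp by (auto simp: mdec_at_def)
  define b where "b = drop s p"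
  define a where "a = map (\<lambda>v. v - (n - s)) (take s p)"
  have U: "set (drop s p) \<union> set (take s p) = {1..n}" using pp by (metis set_append append_take_drop_id Un_commute)
  have D: "set (drop s p) \<inter> set (take s p) = {}" using pp set_take_disj_set_drop_if_distinct by blast
  have ct: "card (set (drop s p)) = n - s" using pp s1 lp by (simp add: distinct_card)
  have lt: "\<forall>x\<in>set (drop s p). \<forall>y\<in>set (take s p). x < y" using take_drop_gt[OF ps] by blast
  have sd: "set (drop s p) = {1..n-s}" using low_block[OF U D lt] ct by metis
  have "set (take s p) = {1..n} - {1..n-s}" using U D sd by blast
  also have "\<dots> = {n-s+1..n}" using s1 by auto
  finally have st: "set (take s p) = {n-s+1..n}" .
  have ge: "v > n - s" if "v \<in> set (take s p)" for v using st that by auto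
  have bpm: "b \<in> perms (n - s)" using sd pp unfolding b_def perms_def by simp
  have sa: "set a = {1..s}"
  proof -
    have "set a = (\<lambda>v. v - (n - s)) ` {n-s+1..n}" unfolding a_def using st by simp
    also have "\<dots> = {1..s}"
    proof
      show "(\<lambda>v. v - (n - s)) ` {n-s+1..n} \<subseteq> {1..s}" using s1 by auto
      show "{1..s} \<subseteq> (\<lambda>v. v - (n - s)) ` {n-s+1..n}"
      proof
        fix w assume "w \<in> {1..s}"
        then show "w \<in> (\<lambda>v. v - (n - s)) ` {n-s+1..n}" using s1 by (intro image_eqI[of _ _ "w + (n - s)"]) auto
      qed
    qed
    finally show ?thesis .
  qed
  have da: "distinct a" unfolding a_def
  proof (subst distinct_map, intro conjI)
    show "distinct (take s p)" using pp by simp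
    show "inj_on (\<lambda>v. v - (n - s)) (set (take s p))"
    proof (rule inj_onI)
      fix x y assume "x \<in> set (take s p)" "y \<in> set (take s p)" "x - (n - s) = y - (n - s)"
      then show "x = y" using ge[of x] ge[of y] by simp
    qed
  qed
  have apm: "a \<in> perms s" using sa da by (simp add: perms_def)
  have pe: "p = take s p @ drop s p" by simp
  have ab: "avoid b" unfolding b_def using pp(3) pe avoid_appR by metis
  have at: "avoid (take s p)" using pp(3) pe avoid_appL by metis
  have aa: "avoid a" unfolding a_def using at
  proof (subst avoid_map)
    show "\<forall>x\<in>set (take s p). \<forall>y\<in>set (take s p). (x - (n - s) < y - (n - s)) = (x < y)"
    proof (intro ballI)
      fix x y assume "x \<in> set (take s p)" "y \<in> set (take s p)"
      then have "x > n - s" "y > n - s" using ge by auto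
      then show "(x - (n - s) < y - (n - s)) = (x < y)" by auto
    qed
  qed
  have lb: "length b = n - s" using bpm perm_len by blast
  have bnth: "b ! k = p ! (s + k)" if "k < n - s" for k using that lp s1 unfolding b_def by simp
  have nmb: "\<not> mdec b"
  proof
    assume "mdec b"
    then obtain t where t: "mdec_at t b" unfolding mdec_def by blast
    have "mdec_at (s + t) p" unfolding mdec_at_def
    proof (intro conjI allI impI)
      show "0 < s + t" using s1 by simp
      show "s + t < length p" using t lb lp s1 by (auto simp: mdec_at_def)
      fix i j assume ij: "i < s + t" "s + t \<le> j" "j < length p"
      show "p ! i > p ! j"
      proof (cases "i < s")
        case True then show ?thesis using ps ij unfolding mdec_at_def by auto
      next
        case False
        then have "b ! (i - s) > b ! (j - s)" using t ij lb lp unfolding mdec_at_def by auto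
        then show ?thesis using bnth[of "i - s"] bnth[of "j - s"] ij lp False by auto
      qed
    qed
    then have "s + t \<le> s" by (rule smax)
    then show False using t by (simp add: mdec_at_def)
  qed
  have "mns a b = p"
  proof -
    have "map (\<lambda>v. v + (n - s)) a = take s p" unfolding a_def map_map
    proof (rule map_idI)
      fix x assume "x \<in> set (take s p)"
      then have "x > n - s" by (rule ge)
      then show "((\<lambda>v. v + (n - s)) \<circ> (\<lambda>v. v - (n - s))) x = x" by simp
    qed
    then show ?thesis unfolding mns_def lb by (simp add: b_def)
  qed
  then show ?thesis using s1 apm bpm aa ab nmb
    by (intro exI[of _ s] exI[of _ a] exI[of _ b]) (auto simp: sep_eq)
qed

lemma pls_no_lt:
  assumes a: "a \<in> perms i" and b: "b \<in> perms j" and nb: "\<not> pdec b"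
    and a': "a' \<in> perms i'" and b': "b' \<in> perms j'" and i'1: "1 \<le> i'" and j'1: "1 \<le> j'"
    and eq: "pls a b = pls a' b'"
  shows "\<not> i < i'"
proof
  assume ii: "i < i'"
  have la: "length a = i" and lb: "length b = j" and la': "length a' = i'" and lb': "length b' = j'"
    using a b a' b' perm_len by blast+
  have len: "i + j = i' + j'" using eq la lb la' lb' by (metis length_append length_map pls_def)
  have pd: "pdec_at i' (pls a b)" using plus_pdec_at[OF a' b' i'1 j'1] eq by simp
  have sb: "set b = {1..j}" using b by (simp add: perms_def)
  have nth: "pls a b ! (i + k) = b ! k + i" if "k < j" for k using that la lb by (simp add: pls_def nth_append)
  have "pdec_at (i' - i) b" unfolding pdec_at_def
  proof (intro conjI allI impI)
    show "0 < i' - i" using ii by simp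
    show "i' - i < length b" using lb len j'1 ii by simp
    fix k l assume kl: "k < i' - i" "i' - i \<le> l" "l < length b"
    have "pls a b ! (i + k) < pls a b ! (i + l)"
      using pd kl lb la unfolding pdec_at_def by (auto simp: pls_def)
    then show "b ! k < b ! l" using nth[of k] nth[of l] kl lb by simp
  qed
  then show False using nb unfolding pdec_def by blast
qed

lemma mns_no_lt:
  assumes a: "a \<in> perms i" and b: "b \<in> perms j" and nb: "\<not> mdec b"
    and a': "a' \<in> perms i'" and b': "b' \<in> perms j'" and i'1: "1 \<le> i'" and j'1: "1 \<le> j'"
    and eq: "mns a b = mns a' b'"
  shows "\<not> i < i'"
proof
  assume ii: "i < i'"
  have la: "length a = i" and lb: "length b = j" and la': "length a' = i'" and lb': "length b' = j'"
    using a b a' b' perm_len by blast+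
  have len: "i + j = i' + j'" using eq la lb la' lb' by (metis length_append length_map mns_def)
  have pd: "mdec_at i' (mns a b)" using minus_mdec_at[OF a' b' i'1 j'1] eq by simp
  have nth: "mns a b ! (i + k) = b ! k" if "k < j" for k using that la by (simp add: mns_def nth_append)
  have "mdec_at (i' - i) b" unfolding mdec_at_def
  proof (intro conjI allI impI)
    show "0 < i' - i" using ii by simp
    show "i' - i < length b" using lb len j'1 ii by simp
    fix k l assume kl: "k < i' - i" "i' - i \<le> l" "l < length b"
    have "mns a b ! (i + k) > mns a b ! (i + l)"
      using pd kl lb la unfolding mdec_at_def by (auto simp: mns_def)
    then show "b ! k > b ! l" using nth[of k] nth[of l] kl lb by simp
  qed
  then show False using nb unfolding mdec_def by blast
qed


lemma pdec_image: "{p \<in> sep_perms n. pdec p} =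
  (\<lambda>(i,a,b). pls a b) ` (SIGMA i:{1..<n}. sep_perms i \<times> {b \<in> sep_perms (n - i). \<not> pdec b})"
proof
  show "{p \<in> sep_perms n. pdec p} \<subseteq> (\<lambda>(i,a,b). pls a b) ` (SIGMA i:{1..<n}. sep_perms i \<times> {b \<in> sep_perms (n - i). \<not> pdec b})"
  proof
    fix p assume "p \<in> {p \<in> sep_perms n. pdec p}"
    then obtain s a b where "s \<in> {1..<n}" "a \<in> sep_perms s" "b \<in> sep_perms (n - s)" "\<not> pdec b" "p = pls a b"
      using pdec_decomp by blast
    then show "p \<in> (\<lambda>(i,a,b). pls a b) ` (SIGMA i:{1..<n}. sep_perms i \<times> {b \<in> sep_perms (n - i). \<not> pdec b})"
      by (intro image_eqI[of _ _ "(s, a, b)"]) auto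
  qed
  show "(\<lambda>(i,a,b). pls a b) ` (SIGMA i:{1..<n}. sep_perms i \<times> {b \<in> sep_perms (n - i). \<not> pdec b}) \<subseteq> {p \<in> sep_perms n. pdec p}"
  proof
    fix p assume "p \<in> (\<lambda>(i,a,b). pls a b) ` (SIGMA i:{1..<n}. sep_perms i \<times> {b \<in> sep_perms (n - i). \<not> pdec b})"
    then obtain i a b where iab: "i \<in> {1..<n}" "a \<in> sep_perms i" "b \<in> sep_perms (n - i)" "p = pls a b" by auto
    have ap: "a \<in> perms i" "avoid a" "b \<in> perms (n - i)" "avoid b" using iab by (auto simp: sep_eq)
    have j1: "1 \<le> i" "1 \<le> n - i" using iab by auto
    have "pls a b \<in> perms n" using plus_perm[OF ap(1,3)] iab by simp
    moreover have "avoid (pls a b)" using plus_avoid[OF ap(1,3,2,4)] .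
    moreover have "pdec (pls a b)" using plus_pdec_at[OF ap(1,3) j1] iab unfolding pdec_def by auto
    ultimately show "p \<in> {p \<in> sep_perms n. pdec p}" using iab by (simp add: sep_eq)
  qed
qed

lemma mdec_image: "{p \<in> sep_perms n. mdec p} =
  (\<lambda>(i,a,b). mns a b) ` (SIGMA i:{1..<n}. sep_perms i \<times> {b \<in> sep_perms (n - i). \<not> mdec b})"
proof
  show "{p \<in> sep_perms n. mdec p} \<subseteq> (\<lambda>(i,a,b). mns a b) ` (SIGMA i:{1..<n}. sep_perms i \<times> {b \<in> sep_perms (n - i). \<not> mdec b})"
  proof
    fix p assume "p \<in> {p \<in> sep_perms n. mdec p}"
    then obtain s a b where "s \<in> {1..<n}" "a \<in> sep_perms s" "b \<in> sep_perms (n - s)" "\<not> mdec b" "p = mns a b"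
      using mdec_decomp by blast
    then show "p \<in> (\<lambda>(i,a,b). mns a b) ` (SIGMA i:{1..<n}. sep_perms i \<times> {b \<in> sep_perms (n - i). \<not> mdec b})"
      by (intro image_eqI[of _ _ "(s, a, b)"]) auto
  qed
  show "(\<lambda>(i,a,b). mns a b) ` (SIGMA i:{1..<n}. sep_perms i \<times> {b \<in> sep_perms (n - i). \<not> mdec b}) \<subseteq> {p \<in> sep_perms n. mdec p}"
  proof
    fix p assume "p \<in> (\<lambda>(i,a,b). mns a b) ` (SIGMA i:{1..<n}. sep_perms i \<times> {b \<in> sep_perms (n - i). \<not> mdec b})"
    then obtain i a b where iab: "i \<in> {1..<n}" "a \<in> sep_perms i" "b \<in> sep_perms (n - i)" "p = mns a b" by auto
    have ap: "a \<in> perms i" "avoid a" "b \<in> perms (n - i)" "avoid b" using iab by (auto simp: sep_eq)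
    have j1: "1 \<le> i" "1 \<le> n - i" using iab by auto
    have "mns a b \<in> perms n" using minus_perm[OF ap(1,3)] iab by simp
    moreover have "avoid (mns a b)" using minus_avoid[OF ap(1,3,2,4)] .
    moreover have "mdec (mns a b)" using minus_mdec_at[OF ap(1,3) j1] iab unfolding mdec_def by auto
    ultimately show "p \<in> {p \<in> sep_perms n. mdec p}" using iab by (simp add: sep_eq)
  qed
qed

lemma pdec_inj: "inj_on (\<lambda>(i,a,b). pls a b) (SIGMA i:{1..<n}. sep_perms i \<times> {b \<in> sep_perms (n - i). \<not> pdec b})"
proof (rule inj_onI)
  fix x y assume xA: "x \<in> (SIGMA i:{1..<n}. sep_perms i \<times> {b \<in> sep_perms (n - i). \<not> pdec b})"
    and yA: "y \<in> (SIGMA i:{1..<n}. sep_perms i \<times> {b \<in> sep_perms (n - i). \<not> pdec b})"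
    and fxy: "(\<lambda>(i,a,b). pls a b) x = (\<lambda>(i,a,b). pls a b) y"
  obtain i a b where x: "x = (i, a, b)" by (cases x) auto
  obtain i' a' b' where y: "y = (i', a', b')" by (cases y) auto
  have A: "i \<in> {1..<n}" "a \<in> sep_perms i" "b \<in> sep_perms (n - i)" "\<not> pdec b" using xA x by auto
  have B: "i' \<in> {1..<n}" "a' \<in> sep_perms i'" "b' \<in> sep_perms (n - i')" "\<not> pdec b'" using yA y by auto
  have eq: "pls a b = pls a' b'" using fxy x y by simp
  have ap: "a \<in> perms i" "b \<in> perms (n - i)" "a' \<in> perms i'" "b' \<in> perms (n - i')"
    using A B by (auto simp: sep_eq)
  have b1: "1 \<le> i'" "1 \<le> n - i'" using B(1) by auto
  have a1: "1 \<le> i" "1 \<le> n - i" using A(1) by auto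
  have "\<not> i < i'" using pls_no_lt[OF ap(1,2) A(4) ap(3,4) b1 eq] .
  moreover have "\<not> i' < i" using pls_no_lt[OF ap(3,4) B(4) ap(1,2) a1 eq[symmetric]] .
  ultimately have ii: "i = i'" by simp
  have la: "length a = i" "length a' = i" using ap perm_len ii by blast+
  have "a = a'" using eq la unfolding pls_def by (metis append_eq_append_conv length_map)
  moreover have "map (\<lambda>v. v + i) b = map (\<lambda>v. v + i) b'" using eq la unfolding pls_def by simp
  then have "b = b'" by (simp add: inj_map_eq_map inj_on_def)
  ultimately show "x = y" using ii x y by simp
qed

lemma mdec_inj: "inj_on (\<lambda>(i,a,b). mns a b) (SIGMA i:{1..<n}. sep_perms i \<times> {b \<in> sep_perms (n - i). \<not> mdec b})"
proof (rule inj_onI)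
  fix x y assume xA: "x \<in> (SIGMA i:{1..<n}. sep_perms i \<times> {b \<in> sep_perms (n - i). \<not> mdec b})"
    and yA: "y \<in> (SIGMA i:{1..<n}. sep_perms i \<times> {b \<in> sep_perms (n - i). \<not> mdec b})"
    and fxy: "(\<lambda>(i,a,b). mns a b) x = (\<lambda>(i,a,b). mns a b) y"
  obtain i a b where x: "x = (i, a, b)" by (cases x) auto
  obtain i' a' b' where y: "y = (i', a', b')" by (cases y) auto
  have A: "i \<in> {1..<n}" "a \<in> sep_perms i" "b \<in> sep_perms (n - i)" "\<not> mdec b" using xA x by auto
  have B: "i' \<in> {1..<n}" "a' \<in> sep_perms i'" "b' \<in> sep_perms (n - i')" "\<not> mdec b'" using yA y by auto
  have eq: "mns a b = mns a' b'" using fxy x y by simp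
  have ap: "a \<in> perms i" "b \<in> perms (n - i)" "a' \<in> perms i'" "b' \<in> perms (n - i')"
    using A B by (auto simp: sep_eq)
  have b1: "1 \<le> i'" "1 \<le> n - i'" using B(1) by auto
  have a1: "1 \<le> i" "1 \<le> n - i" using A(1) by auto
  have "\<not> i < i'" using mns_no_lt[OF ap(1,2) A(4) ap(3,4) b1 eq] .
  moreover have "\<not> i' < i" using mns_no_lt[OF ap(3,4) B(4) ap(1,2) a1 eq[symmetric]] .
  ultimately have ii: "i = i'" by simp
  have lb: "length b = n - i" "length b' = n - i" using ap perm_len ii by blast+
  have la: "length a = i" "length a' = i" using ap perm_len ii by blast+
  have "b = b'" using eq la unfolding mns_def by (metis append_eq_append_conv length_map)
  moreover have "map (\<lambda>v. v + (n - i)) a = map (\<lambda>v. v + (n - i)) a'" using eq la lb unfolding mns_def by simp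
  then have "a = a'" by (simp add: inj_map_eq_map inj_on_def)
  ultimately show "x = y" using ii x y by simp
qed

definition SS :: "nat \<Rightarrow> int poly" where "SS n = (\<Sum>p\<in>sep_perms n. monom 1 (des p))"
definition SX :: "nat \<Rightarrow> int poly" where "SX n = (\<Sum>p\<in>{p\<in>sep_perms n. \<not> mdec p}. monom 1 (des p))"
definition SY :: "nat \<Rightarrow> int poly" where "SY n = (\<Sum>p\<in>{p\<in>sep_perms n. \<not> pdec p}. monom 1 (des p))"
definition SP :: "nat \<Rightarrow> int poly" where "SP n = (\<Sum>p\<in>{p\<in>sep_perms n. pdec p}. monom 1 (des p))"
definition SM :: "nat \<Rightarrow> int poly" where "SM n = (\<Sum>p\<in>{p\<in>sep_perms n. mdec p}. monom 1 (des p))"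

lemma SP_rec: "SP n = (\<Sum>i\<in>{1..<n}. SS i * SY (n - i))"
proof -
  let ?A = "SIGMA i:{1..<n}. sep_perms i \<times> {b \<in> sep_perms (n - i). \<not> pdec b}"
  have "SP n = (\<Sum>(i,a,b)\<in>?A. monom 1 (des (pls a b)))"
    unfolding SP_def pdec_image by (subst sum.reindex[OF pdec_inj]) (simp add: case_prod_beta)
  also have "\<dots> = (\<Sum>(i,a,b)\<in>?A. monom 1 (des a) * monom 1 (des b))"
  proof (rule sum.cong[OF refl], clarify)
    fix i a b assume h: "i \<in> {1..<n}" "a \<in> sep_perms i" "b \<in> sep_perms (n - i)"
    have j1: "1 \<le> i" "1 \<le> n - i" using h by auto
    then have "des (pls a b) = des a + des b" using plus_des[of a i b "n - i"] h by (simp add: sep_eq)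
    then show "monom 1 (des (pls a b)) = monom (1::int) (des a) * monom 1 (des b)"
      by (simp add: mult_monom)
  qed
  also have "\<dots> = (\<Sum>i\<in>{1..<n}. \<Sum>(a,b)\<in>sep_perms i \<times> {b \<in> sep_perms (n - i). \<not> pdec b}. monom 1 (des a) * monom 1 (des b))"
    by (subst sum.Sigma[symmetric]) (auto simp: finite_sep)
  also have "\<dots> = (\<Sum>i\<in>{1..<n}. SS i * SY (n - i))"
    unfolding SS_def SY_def sum_product
    by (intro sum.cong refl) (simp add: sum.cartesian_product)
  finally show ?thesis .
qed

lemma SM_rec: "SM n = monom 1 1 * (\<Sum>i\<in>{1..<n}. SS i * SX (n - i))"
proof -
  let ?A = "SIGMA i:{1..<n}. sep_perms i \<times> {b \<in> sep_perms (n - i). \<not> mdec b}"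
  have "SM n = (\<Sum>(i,a,b)\<in>?A. monom 1 (des (mns a b)))"
    unfolding SM_def mdec_image by (subst sum.reindex[OF mdec_inj]) (simp add: case_prod_beta)
  also have "\<dots> = (\<Sum>(i,a,b)\<in>?A. monom 1 1 * (monom 1 (des a) * monom 1 (des b)))"
  proof (rule sum.cong[OF refl], clarify)
    fix i a b assume h: "i \<in> {1..<n}" "a \<in> sep_perms i" "b \<in> sep_perms (n - i)"
    have j1: "1 \<le> i" "1 \<le> n - i" using h by auto
    then have "des (mns a b) = des a + des b + 1" using minus_des[of a i b "n - i"] h by (simp add: sep_eq)
    then show "monom 1 (des (mns a b)) = monom (1::int) 1 * (monom 1 (des a) * monom 1 (des b))"
      by (simp add: mult_monom)
  qed
  also have "\<dots> = monom 1 1 * (\<Sum>i\<in>{1..<n}. \<Sum>(a,b)\<in>sep_perms i \<times> {b \<in> sep_perms (n - i). \<not> mdec b}. monom 1 (des a) * monom 1 (des b))"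
  proof -
    have "(\<Sum>(i,a,b)\<in>?A. monom 1 1 * (monom 1 (des a) * monom 1 (des b))) =
        monom 1 1 * (\<Sum>(i,a,b)\<in>?A. monom (1::int) (des a) * monom 1 (des b))"
      by (subst sum_distrib_left) (simp add: case_prod_beta)
    also have "(\<Sum>(i,a,b)\<in>?A. monom (1::int) (des a) * monom 1 (des b)) =
       (\<Sum>i\<in>{1..<n}. \<Sum>(a,b)\<in>sep_perms i \<times> {b \<in> sep_perms (n - i). \<not> mdec b}. monom 1 (des a) * monom 1 (des b))"
      by (subst sum.Sigma[symmetric]) (auto simp: finite_sep)
    finally show ?thesis .
  qed
  also have "\<dots> = monom 1 1 * (\<Sum>i\<in>{1..<n}. SS i * SX (n - i))"
    unfolding SS_def SX_def sum_product
    by (intro arg_cong2[where f="(*)"] refl sum.cong) (simp add: sum.cartesian_product)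
  finally show ?thesis .
qed

lemma sep_split: assumes "2 \<le> n"
  shows "SS n = SP n + SM n" "SX n = SP n" "SY n = SM n"
proof -
  have ex: "pdec p \<or> mdec p" if "p \<in> sep_perms n" for p
    using exhaust[of p] that assms perm_len[of p n] by (auto simp: sep_eq perms_def)
  have ne: "\<not> (pdec p \<and> mdec p)" for p using not_pdec_and_mdec by blast
  have "sep_perms n = {p\<in>sep_perms n. pdec p} \<union> {p\<in>sep_perms n. mdec p}" using ex by auto
  then have "SS n = (\<Sum>p\<in>{p\<in>sep_perms n. pdec p} \<union> {p\<in>sep_perms n. mdec p}. monom 1 (des p))"
    unfolding SS_def by simp
  also have "\<dots> = SP n + SM n" unfolding SP_def SM_def
  proof (rule sum.union_disjoint)
    show "finite {p \<in> sep_perms n. pdec p}" using finite_sep by simp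
    show "finite {p \<in> sep_perms n. mdec p}" using finite_sep by simp
    show "{p \<in> sep_perms n. pdec p} \<inter> {p \<in> sep_perms n. mdec p} = {}" using ne by blast
  qed
  finally show "SS n = SP n + SM n" .
  have "{p\<in>sep_perms n. \<not> mdec p} = {p\<in>sep_perms n. pdec p}" using ex ne by blast
  then show "SX n = SP n" unfolding SX_def SP_def by simp
  have "{p\<in>sep_perms n. \<not> pdec p} = {p\<in>sep_perms n. mdec p}" using ex ne by blast
  then show "SY n = SM n" unfolding SY_def SM_def by simp
qed

lemma sep1: "sep_perms 1 = {[1]}"
proof
  show "sep_perms 1 \<subseteq> {[1]}"
  proof
    fix p assume p: "p \<in> sep_perms 1"
    then have "length p = 1" "set p = {1}" using perm_len by (auto simp: sep_eq perms_def)
    then show "p \<in> {[1]}" by (cases p) auto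
  qed
  show "{[1]} \<subseteq> sep_perms 1"
    by (auto simp: sep_perms_def perms_def contains_2413_def contains_3142_def)
qed

lemma S1: "SS 1 = 1" "SX 1 = 1" "SY 1 = 1"
proof -
  have np: "\<not> pdec [1]" "\<not> mdec [1]" by (auto simp: pdec_def mdec_def pdec_at_def mdec_at_def)
  have d: "des [1] = 0" by (simp add: des_def)
  show "SS 1 = 1" unfolding SS_def sep1 using d by simp
  show "SX 1 = 1" unfolding SX_def sep1 using d np by (simp add: Collect_conv_if)
  show "SY 1 = 1" unfolding SY_def sep1 using d np by (simp add: Collect_conv_if)
qed


lemma treesz_Suc: "{t::'a tree. size t = Suc m} =
  (\<lambda>(i,l,x,r). Node l x r) ` (SIGMA i:{..m}. {l. size l = i} \<times> UNIV \<times> {r. size r = m - i})"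
proof
  show "{t::'a tree. size t = Suc m} \<subseteq> (\<lambda>(i,l,x,r). Node l x r) ` (SIGMA i:{..m}. {l. size l = i} \<times> UNIV \<times> {r. size r = m - i})"
  proof
    fix t :: "'a tree" assume "t \<in> {t. size t = Suc m}"
    then obtain l x r where t: "t = Node l x r" and s: "size l + size r = m"
      by (cases t) auto
    show "t \<in> (\<lambda>(i,l,x,r). Node l x r) ` (SIGMA i:{..m}. {l. size l = i} \<times> UNIV \<times> {r. size r = m - i})"
      by (rule image_eqI[where x="(size l, l, x, r)"]) (use t s in auto)
  qed
qed auto

lemma finite_treesz: "finite {t::bool tree. size t = m}"
proof (induction m rule: less_induct)
  case (less m)
  show ?case
  proof (cases m)
    case 0 then show ?thesis by simp
  next
    case (Suc k)
    have "finite (SIGMA i:{..k}. {l::bool tree. size l = i} \<times> (UNIV::bool set) \<times> {r::bool tree. size r = k - i})"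
    proof (rule finite_SigmaI)
      fix i assume i: "i \<in> {..k}"
      have "finite {l::bool tree. size l = i}" using less Suc i by auto
      moreover have "finite {r::bool tree. size r = k - i}" using less Suc by auto
      ultimately show "finite ({l::bool tree. size l = i} \<times> (UNIV::bool set) \<times> {r::bool tree. size r = k - i})"
        by (intro finite_cartesian_product) simp_all
    qed auto
    then show ?thesis unfolding Suc treesz_Suc by simp
  qed
qed

lemma sum_treesz_Suc:
  fixes f :: "bool tree \<Rightarrow> 'b::comm_monoid_add"
  shows "(\<Sum>t\<in>{t. size t = Suc m}. f t) =
    (\<Sum>i\<le>m. \<Sum>l\<in>{l. size l = i}. \<Sum>r\<in>{r. size r = m - i}. f (Node l True r) + f (Node l False r))"
proof -
  let ?A = "SIGMA i:{..m}. {l::bool tree. size l = i} \<times> (UNIV::bool set) \<times> {r. size r = m - i}"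
  have inj: "inj_on (\<lambda>(i,l,x,r). Node l x r) ?A" by (auto simp: inj_on_def)
  have "(\<Sum>t\<in>{t. size t = Suc m}. f t) = (\<Sum>(i,l,x,r)\<in>?A. f (Node l x r))"
    unfolding treesz_Suc by (subst sum.reindex[OF inj]) (simp add: case_prod_beta)
  also have "\<dots> = (\<Sum>i\<le>m. \<Sum>(l,x,r)\<in>{l::bool tree. size l = i} \<times> (UNIV::bool set) \<times> {r. size r = m - i}. f (Node l x r))"
    by (subst sum.Sigma[symmetric]) (auto simp: finite_treesz)
  also have "\<dots> = (\<Sum>i\<le>m. \<Sum>l\<in>{l. size l = i}. \<Sum>r\<in>{r. size r = m - i}. f (Node l True r) + f (Node l False r))"
  proof (rule sum.cong[OF refl])
    fix i
    have "(\<Sum>(l,x,r)\<in>{l::bool tree. size l = i} \<times> (UNIV::bool set) \<times> {r. size r = m - i}. f (Node l x r))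
       = (\<Sum>l\<in>{l. size l = i}. \<Sum>(x,r)\<in>(UNIV::bool set) \<times> {r. size r = m - i}. f (Node l x r))"
      by (subst sum.cartesian_product[symmetric]) (simp add: case_prod_beta)
    also have "\<dots> = (\<Sum>l\<in>{l. size l = i}. \<Sum>x\<in>(UNIV::bool set). \<Sum>r\<in>{r. size r = m - i}. f (Node l x r))"
      by (subst sum.cartesian_product[symmetric]) (simp add: case_prod_beta)
    also have "\<dots> = (\<Sum>l\<in>{l. size l = i}. \<Sum>r\<in>{r. size r = m - i}. f (Node l True r) + f (Node l False r))"
      by (simp add: UNIV_bool sum.distrib add.commute)
    finally show "(\<Sum>(l,x,r)\<in>{l::bool tree. size l = i} \<times> (UNIV::bool set) \<times> {r. size r = m - i}. f (Node l x r)) = \<dots>" .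
  qed
  finally show ?thesis .
qed


fun neg :: "bool tree \<Rightarrow> nat" where
  "neg Leaf = 0"
| "neg (Node l x r) = (if x then 0 else 1) + neg l + neg r"

lemma rc_Node: "right_chains (Node l x r) = (x # chain_labels r) # right_chains l @ lchains r"
  by (simp add: right_chains_def)

lemma rc_Leaf[simp]: "right_chains Leaf = []"
  by (simp add: right_chains_def)

lemma alternating_Nil[simp]: "alternating []" by (simp add: alternating_def)

lemma alternating_Cons: "alternating (x # c) \<longleftrightarrow> alternating c \<and> (c = [] \<or> hd c \<noteq> x)"
proof
  assume a: "alternating (x # c)"
  have "alternating c" unfolding alternating_def
  proof (intro allI impI)
    fix i assume "Suc i < length c"
    then show "c ! i \<noteq> c ! Suc i" using a[unfolded alternating_def, rule_format, of "Suc i"] by simp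
  qed
  moreover have "c = [] \<or> hd c \<noteq> x"
    using a[unfolded alternating_def, rule_format, of 0] by (cases c) auto
  ultimately show "alternating c \<and> (c = [] \<or> hd c \<noteq> x)" by blast
next
  assume a: "alternating c \<and> (c = [] \<or> hd c \<noteq> x)"
  show "alternating (x # c)" unfolding alternating_def
  proof (intro allI impI)
    fix i assume i: "Suc i < length (x # c)"
    show "(x # c) ! i \<noteq> (x # c) ! Suc i"
    proof (cases i)
      case 0 then show ?thesis using a i by (cases c) auto
    next
      case (Suc j) then show ?thesis using a i by (auto simp: alternating_def)
    qed
  qed
qed

lemma disk_alt: "is_disk r \<longleftrightarrow> alternating (chain_labels r) \<and> (\<forall>c\<in>set (lchains r). alternating c)"
  by (cases r) (auto simp: is_disk_def right_chains_def)

lemma disk_Node: "is_disk (Node l x r) \<longleftrightarrow> is_disk l \<and> is_disk r \<and> (chain_labels r = [] \<or> hd (chain_labels r) \<noteq> x)"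
  unfolding disk_alt[of "Node l x r"] disk_alt[of r]
  by (auto simp: alternating_Cons is_disk_def right_chains_def)

lemma disk_Leaf[simp]: "is_disk Leaf" by (simp add: is_disk_def)

lemma chain_Nil_iff: "chain_labels r = [] \<longleftrightarrow> r = Leaf" by (cases r) auto


definition a_w :: "bool tree \<Rightarrow> int poly" where
  "a_w T = (if is_disk T then monom 1 (neg T) else 0)"

fun d_w :: "bool \<Rightarrow> bool tree \<Rightarrow> int poly" where
  "d_w b Leaf = 0"
| "d_w b (Node l x r) = (if x = b \<and> is_disk (Node l x r) then monom 1 (neg (Node l x r)) else 0)"

lemma d_w_Node: "d_w b (Node l x r) = (if x = b then monom 1 (if b then 0 else 1) * a_w l * ((if r = Leaf then 1 else 0) + d_w (\<not> b) r) else 0)"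
proof (cases r)
  case Leaf then show ?thesis by (auto simp: a_w_def disk_Node mult_monom)
next
  case (Node l' y r')
  have dk: "is_disk (Node l x r) \<longleftrightarrow> is_disk l \<and> is_disk r \<and> y \<noteq> x"
    using disk_Node[of l x r] Node by simp
  have dr: "d_w (\<not> b) r = (if y = (\<not> b) \<and> is_disk r then monom 1 (neg r) else 0)"
    unfolding Node by (cases y; cases b) auto
  show ?thesis
    unfolding d_w.simps dk dr a_w_def neg.simps
    using Node by (cases b; cases x; cases y) (simp_all add: mult_monom)
qed

lemma a_w_split: "a_w T = (if T = Leaf then 1 else 0) + d_w True T + d_w False T"
  by (cases T) (auto simp: a_w_def)

lemma sum_Leaf_ind: "(\<Sum>r\<in>{r::bool tree. size r = j}. (if r = Leaf then c else 0)) = (if j = 0 then c else (0::'b::comm_monoid_add))"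
proof (cases j)
  case 0
  have "{r::bool tree. size r = 0} = {Leaf}" by auto
  then show ?thesis using 0 by simp
next
  case (Suc k)
  then show ?thesis by (intro trans[OF sum.neutral]) auto
qed

definition AA :: "nat \<Rightarrow> int poly" where "AA m = (\<Sum>T\<in>{T. size T = m}. a_w T)"
definition DD :: "bool \<Rightarrow> nat \<Rightarrow> int poly" where "DD b m = (\<Sum>T\<in>{T. size T = m}. d_w b T)"

lemma AA_split: "AA m = (if m = 0 then 1 else 0) + DD True m + DD False m"
  unfolding AA_def DD_def a_w_split sum.distrib
  by (simp add: sum_Leaf_ind)

lemma DD_0: "DD b 0 = 0"
proof -
  have "{r::bool tree. size r = 0} = {Leaf}" by auto
  then show ?thesis by (simp add: DD_def)
qed


lemma dd_pair: "d_w b (Node l True r) + d_w b (Node l False r) =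
   monom 1 (if b then 0 else 1) * a_w l * ((if r = Leaf then 1 else 0) + d_w (\<not> b) r)"
  unfolding d_w_Node by (cases b) simp_all

lemma DD_Suc: "DD b (Suc m) = monom 1 (if b then 0 else 1) *
   (\<Sum>i\<le>m. AA i * ((if m - i = 0 then 1 else 0) + DD (\<not> b) (m - i)))"
proof -
  have "DD b (Suc m) = (\<Sum>i\<le>m. \<Sum>l\<in>{l. size l = i}. \<Sum>r\<in>{r. size r = m - i}.
     monom 1 (if b then 0 else 1) * a_w l * ((if r = Leaf then 1 else 0) + d_w (\<not> b) r))"
    unfolding DD_def sum_treesz_Suc dd_pair ..
  also have "\<dots> = (\<Sum>i\<le>m. monom 1 (if b then 0 else 1) * (AA i * ((if m - i = 0 then 1 else 0) + DD (\<not> b) (m - i))))"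
  proof (rule sum.cong[OF refl])
    fix i
    let ?c = "monom 1 (if b then 0 else 1) :: int poly"
    have "(\<Sum>l\<in>{l. size l = i}. \<Sum>r\<in>{r. size r = m - i}. ?c * a_w l * ((if r = Leaf then 1 else 0) + d_w (\<not> b) r))
       = (\<Sum>l\<in>{l. size l = i}. ?c * a_w l * (\<Sum>r\<in>{r. size r = m - i}. ((if r = Leaf then 1 else 0) + d_w (\<not> b) r)))"
      by (simp only: sum_distrib_left)
    also have "\<dots> = (\<Sum>l\<in>{l. size l = i}. ?c * a_w l * ((if m - i = 0 then 1 else 0) + DD (\<not> b) (m - i)))"
      by (simp only: sum.distrib sum_Leaf_ind DD_def)
    also have "\<dots> = ?c * (AA i * ((if m - i = 0 then 1 else 0) + DD (\<not> b) (m - i)))"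
      by (simp only: AA_def sum_distrib_right sum_distrib_left mult.assoc)
    finally show "(\<Sum>l\<in>{l. size l = i}. \<Sum>r\<in>{r. size r = m - i}. ?c * a_w l * ((if r = Leaf then 1 else 0) + d_w (\<not> b) r)) = \<dots>" .
  qed
  finally show ?thesis by (simp only: sum_distrib_left)
qed


definition goodc :: "bool list list \<Rightarrow> bool" where
  "goodc cs = (\<forall>c\<in>set cs. odd (length c) \<longrightarrow> hd c)"
definition oddc :: "bool list list \<Rightarrow> nat" where
  "oddc cs = length (filter (\<lambda>c. odd (length c)) cs)"

lemma goodc_append[simp]: "goodc (xs @ ys) = (goodc xs \<and> goodc ys)" by (auto simp: goodc_def)
lemma oddc_append[simp]: "oddc (xs @ ys) = oddc xs + oddc ys" by (simp add: oddc_def)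
lemma goodc_Cons[simp]: "goodc (c # ys) = ((odd (length c) \<longrightarrow> hd c) \<and> goodc ys)" by (auto simp: goodc_def)
lemma oddc_Cons[simp]: "oddc (c # ys) = (if odd (length c) then 1 else 0) + oddc ys" by (simp add: oddc_def)
lemma goodc_Nil[simp]: "goodc []" by (simp add: goodc_def)
lemma oddc_Nil[simp]: "oddc [] = 0" by (simp add: oddc_def)
lemma lchains_Leaf_simp[simp]: "lchains Leaf = []" by simp
lemma r_o_oddc: "r_o t = oddc (right_chains t)" by (simp add: r_o_def oddc_def)

lemma lchains_Node': "lchains (Node l x r) = right_chains l @ lchains r"
  by (simp add: right_chains_def)

definition PP :: "int poly" where "PP = [:1, 1:]"

definition g_w :: "bool tree \<Rightarrow> int poly" where
  "g_w T = (if is_disk T \<and> goodc (right_chains T) then monom 1 (neg T) * PP ^ (r_o T) else 0)"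

fun e_w :: "bool \<Rightarrow> bool \<Rightarrow> bool tree \<Rightarrow> int poly" where
  "e_w b p Leaf = 0"
| "e_w b p (Node l x r) = (if x = b \<and> odd (length (chain_labels (Node l x r))) = p \<and> is_disk (Node l x r)
      then monom 1 (neg (Node l x r)) else 0)"

fun h_w :: "bool \<Rightarrow> bool \<Rightarrow> bool tree \<Rightarrow> int poly" where
  "h_w b p Leaf = 0"
| "h_w b p (Node l x r) = (if x = b \<and> odd (length (chain_labels (Node l x r))) = p \<and> is_disk (Node l x r)
      \<and> goodc (lchains (Node l x r))
      then monom 1 (neg (Node l x r)) * PP ^ (oddc (lchains (Node l x r))) else 0)"

lemma e_w_Node: "e_w b p (Node l x r) = (if x = b then monom 1 (if b then 0 else 1) * a_w l *
   ((if r = Leaf then (if p then 1 else 0) else 0) + e_w (\<not> b) (\<not> p) r) else 0)"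
proof (cases r)
  case Leaf then show ?thesis by (auto simp: a_w_def disk_Node mult_monom)
next
  case (Node l' y r')
  have dk: "is_disk (Node l x r) \<longleftrightarrow> is_disk l \<and> is_disk r \<and> y \<noteq> x"
    using disk_Node[of l x r] Node by simp
  have dr: "e_w (\<not> b) (\<not> p) r = (if y = (\<not> b) \<and> odd (length (chain_labels r)) = (\<not> p) \<and> is_disk r then monom 1 (neg r) else 0)"
    unfolding Node by (cases y; cases b; cases p) auto
  have ch: "length (chain_labels (Node l x r)) = Suc (length (chain_labels r))" by simp
  show ?thesis
    unfolding e_w.simps dk dr a_w_def neg.simps ch
    using Node by (cases b; cases x; cases y; cases p) (simp_all add: mult_monom)
qed

lemma h_w_Node: "h_w b p (Node l x r) = (if x = b then monom 1 (if b then 0 else 1) * g_w l *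
   ((if r = Leaf then (if p then 1 else 0) else 0) + h_w (\<not> b) (\<not> p) r) else 0)"
proof (cases r)
  case Leaf
  have dk: "is_disk (Node l x r) \<longleftrightarrow> is_disk l" using disk_Node[of l x r] Leaf by simp
  show ?thesis
    unfolding h_w.simps dk g_w_def neg.simps lchains_Node' r_o_oddc oddc_append goodc_append
    using Leaf by (cases b; cases x; cases p) (simp_all add: mult_monom)
next
  case (Node l' y r')
  have dk: "is_disk (Node l x r) \<longleftrightarrow> is_disk l \<and> is_disk r \<and> y \<noteq> x"
    using disk_Node[of l x r] Node by simp
  have dr: "h_w (\<not> b) (\<not> p) r = (if y = (\<not> b) \<and> odd (length (chain_labels r)) = (\<not> p) \<and> is_disk r
      \<and> goodc (lchains r) then monom 1 (neg r) * PP ^ (oddc (lchains r)) else 0)"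
    unfolding Node by (cases y; cases b; cases p) auto
  have ch: "length (chain_labels (Node l x r)) = Suc (length (chain_labels r))" by simp
  show ?thesis
    unfolding h_w.simps dk dr g_w_def neg.simps ch lchains_Node' r_o_oddc oddc_append goodc_append
    using Node by (cases b; cases x; cases y; cases p) (simp_all add: mult_monom power_add mult_ac)
qed

lemma a_w_split2: "a_w T = (if T = Leaf then 1 else 0) + e_w True False T + e_w False False T
   + e_w True True T + e_w False True T"
  by (cases T) (auto simp: a_w_def)

lemma g_w_split: "g_w T = (if T = Leaf then 1 else 0) + h_w True False T + h_w False False T
   + PP * h_w True True T"
proof (cases T)
  case Leaf then show ?thesis by (simp add: g_w_def r_o_def goodc_def)
next
  case (Node l x r)
  have rc: "right_chains T = chain_labels T # lchains T" using Node by (simp add: right_chains_def)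
  have ch: "chain_labels T = x # chain_labels r" using Node by simp
  have hh: "h_w b p T = (if x = b \<and> odd (length (chain_labels T)) = p \<and> is_disk T \<and> goodc (lchains T)
      then monom 1 (neg T) * PP ^ (oddc (lchains T)) else 0)" for b p
    unfolding Node by (rule h_w.simps(2))
  show ?thesis
    unfolding g_w_def rc r_o_oddc hh goodc_Cons oddc_Cons using Node
    by (cases x; cases "odd (length (chain_labels T))") (simp_all add: mult_ac ch)
qed


definition EE :: "bool \<Rightarrow> bool \<Rightarrow> nat \<Rightarrow> int poly" where "EE b p m = (\<Sum>T\<in>{T. size T = m}. e_w b p T)"
definition HH :: "bool \<Rightarrow> bool \<Rightarrow> nat \<Rightarrow> int poly" where "HH b p m = (\<Sum>T\<in>{T. size T = m}. h_w b p T)"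
definition GG :: "nat \<Rightarrow> int poly" where "GG m = (\<Sum>T\<in>{T. size T = m}. g_w T)"

lemma size0_Leaf: "{r::bool tree. size r = 0} = {Leaf}" by auto

lemma EE_0: "EE b p 0 = 0" by (simp add: EE_def size0_Leaf)
lemma HH_0: "HH b p 0 = 0" by (simp add: HH_def size0_Leaf)

lemma AA_split2: "AA m = (if m = 0 then 1 else 0) + EE True False m + EE False False m + EE True True m + EE False True m"
  unfolding AA_def EE_def a_w_split2 sum.distrib by (simp add: sum_Leaf_ind)

lemma GG_split: "GG m = (if m = 0 then 1 else 0) + HH True False m + HH False False m + PP * HH True True m"
  unfolding GG_def HH_def g_w_split sum.distrib sum_distrib_left[symmetric] by (simp add: sum_Leaf_ind)

lemma ee_pair: "e_w b p (Node l True r) + e_w b p (Node l False r) =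
   monom 1 (if b then 0 else 1) * a_w l * ((if r = Leaf then (if p then 1 else 0) else 0) + e_w (\<not> b) (\<not> p) r)"
  unfolding e_w_Node by (cases b) simp_all

lemma hh_pair: "h_w b p (Node l True r) + h_w b p (Node l False r) =
   monom 1 (if b then 0 else 1) * g_w l * ((if r = Leaf then (if p then 1 else 0) else 0) + h_w (\<not> b) (\<not> p) r)"
  unfolding h_w_Node by (cases b) simp_all

lemma EE_Suc: "EE b p (Suc m) = monom 1 (if b then 0 else 1) *
   (\<Sum>i\<le>m. AA i * ((if m - i = 0 then (if p then 1 else 0) else 0) + EE (\<not> b) (\<not> p) (m - i)))"
proof -
  have "EE b p (Suc m) = (\<Sum>i\<le>m. \<Sum>l\<in>{l. size l = i}. \<Sum>r\<in>{r. size r = m - i}.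
     monom 1 (if b then 0 else 1) * a_w l * ((if r = Leaf then (if p then 1 else 0) else 0) + e_w (\<not> b) (\<not> p) r))"
    unfolding EE_def sum_treesz_Suc ee_pair ..
  also have "\<dots> = (\<Sum>i\<le>m. monom 1 (if b then 0 else 1) * (AA i * ((if m - i = 0 then (if p then 1 else 0) else 0) + EE (\<not> b) (\<not> p) (m - i))))"
  proof (rule sum.cong[OF refl])
    fix i
    let ?c = "monom 1 (if b then 0 else 1) :: int poly"
    have "(\<Sum>l\<in>{l. size l = i}. \<Sum>r\<in>{r. size r = m - i}. ?c * a_w l * ((if r = Leaf then (if p then 1 else 0) else 0) + e_w (\<not> b) (\<not> p) r))
       = (\<Sum>l\<in>{l. size l = i}. ?c * a_w l * (\<Sum>r\<in>{r. size r = m - i}. ((if r = Leaf then (if p then 1 else 0) else 0) + e_w (\<not> b) (\<not> p) r)))"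
      by (simp only: sum_distrib_left)
    also have "\<dots> = (\<Sum>l\<in>{l. size l = i}. ?c * a_w l * ((if m - i = 0 then (if p then 1 else 0) else 0) + EE (\<not> b) (\<not> p) (m - i)))"
      by (simp only: sum.distrib sum_Leaf_ind EE_def)
    also have "\<dots> = ?c * (AA i * ((if m - i = 0 then (if p then 1 else 0) else 0) + EE (\<not> b) (\<not> p) (m - i)))"
      by (simp only: AA_def sum_distrib_right sum_distrib_left mult.assoc)
    finally show "(\<Sum>l\<in>{l. size l = i}. \<Sum>r\<in>{r. size r = m - i}. ?c * a_w l * ((if r = Leaf then (if p then 1 else 0) else 0) + e_w (\<not> b) (\<not> p) r)) = \<dots>" .
  qed
  finally show ?thesis by (simp only: sum_distrib_left)
qed

lemma HH_Suc: "HH b p (Suc m) = monom 1 (if b then 0 else 1) *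
   (\<Sum>i\<le>m. GG i * ((if m - i = 0 then (if p then 1 else 0) else 0) + HH (\<not> b) (\<not> p) (m - i)))"
proof -
  have "HH b p (Suc m) = (\<Sum>i\<le>m. \<Sum>l\<in>{l. size l = i}. \<Sum>r\<in>{r. size r = m - i}.
     monom 1 (if b then 0 else 1) * g_w l * ((if r = Leaf then (if p then 1 else 0) else 0) + h_w (\<not> b) (\<not> p) r))"
    unfolding HH_def sum_treesz_Suc hh_pair ..
  also have "\<dots> = (\<Sum>i\<le>m. monom 1 (if b then 0 else 1) * (GG i * ((if m - i = 0 then (if p then 1 else 0) else 0) + HH (\<not> b) (\<not> p) (m - i))))"
  proof (rule sum.cong[OF refl])
    fix i
    let ?c = "monom 1 (if b then 0 else 1) :: int poly"
    have "(\<Sum>l\<in>{l. size l = i}. \<Sum>r\<in>{r. size r = m - i}. ?c * g_w l * ((if r = Leaf then (if p then 1 else 0) else 0) + h_w (\<not> b) (\<not> p) r))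
       = (\<Sum>l\<in>{l. size l = i}. ?c * g_w l * (\<Sum>r\<in>{r. size r = m - i}. ((if r = Leaf then (if p then 1 else 0) else 0) + h_w (\<not> b) (\<not> p) r)))"
      by (simp only: sum_distrib_left)
    also have "\<dots> = (\<Sum>l\<in>{l. size l = i}. ?c * g_w l * ((if m - i = 0 then (if p then 1 else 0) else 0) + HH (\<not> b) (\<not> p) (m - i)))"
      by (simp only: sum.distrib sum_Leaf_ind HH_def)
    also have "\<dots> = ?c * (GG i * ((if m - i = 0 then (if p then 1 else 0) else 0) + HH (\<not> b) (\<not> p) (m - i)))"
      by (simp only: GG_def sum_distrib_right sum_distrib_left mult.assoc)
    finally show "(\<Sum>l\<in>{l. size l = i}. \<Sum>r\<in>{r. size r = m - i}. ?c * g_w l * ((if r = Leaf then (if p then 1 else 0) else 0) + h_w (\<not> b) (\<not> p) r)) = \<dots>" .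
  qed
  finally show ?thesis by (simp only: sum_distrib_left)
qed

lemma PP_eq: "PP = 1 + monom 1 1"
  by (simp add: PP_def monom_altdef one_pCons)

lemma AG_of_EH:
  assumes "\<forall>b p. EE b p m = HH b p m" "EE False True m = monom 1 1 * EE True True m"
  shows "AA m = GG m"
  unfolding AA_split2 GG_split using assms by (simp add: PP_eq algebra_simps)

lemma EH: "(\<forall>b p. EE b p m = HH b p m) \<and> EE False True m = monom 1 1 * EE True True m
   \<and> EE False False m = EE True False m"
proof (induction m rule: less_induct)
  case (less m)
  show ?case
  proof (cases m)
    case 0 then show ?thesis by (simp add: EE_0 HH_0)
  next
    case (Suc k)
    have AG: "AA i = GG i" if "i \<le> k" for i
      using less[of i] that Suc by (intro AG_of_EH) auto
    have IH: "(\<forall>b p. EE b p j = HH b p j) \<and> EE False True j = monom 1 1 * EE True True j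
       \<and> EE False False j = EE True False j" if "j \<le> k" for j
      using less[of j] that Suc by auto
    have 1: "EE b p (Suc k) = HH b p (Suc k)" for b p
      unfolding EE_Suc HH_Suc
      by (intro arg_cong2[where f="(*)"] refl sum.cong) (use AG IH in auto)
    have ff: "EE False False j = EE True False j" if "j \<le> k" for j using IH[OF that] by blast
    have ft: "EE False True j = monom 1 1 * EE True True j" if "j \<le> k" for j using IH[OF that] by blast
    have 2: "EE False True (Suc k) = monom 1 1 * EE True True (Suc k)"
      unfolding EE_Suc
      by (simp add: ff)
    have 3: "EE False False (Suc k) = EE True False (Suc k)"
      unfolding EE_Suc
      by (simp add: ft sum_distrib_left mult_ac)
    show ?thesis using 1 2 3 Suc by auto
  qed
qed

lemma AA_GG: "AA m = GG m"
  using EH[of m] by (intro AG_of_EH) auto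


lemma rc_sum:
  fixes f :: "bool list \<Rightarrow> nat" and r :: "bool tree"
  assumes "f [] = 0"
  shows "sum_list (map f (right_chains r)) = f (chain_labels r) + sum_list (map f (lchains r))"
  using assms by (cases r) (simp_all add: right_chains_def)

lemma size_chains: "size (T::bool tree) = sum_list (map length (right_chains T))"
proof (induction T)
  case Leaf then show ?case by simp
next
  case (Node l x r)
  show ?case unfolding rc_Node using Node rc_sum[of length r] by simp
qed

lemma neg_chains: "neg (T::bool tree) = sum_list (map (\<lambda>c. count_list c False) (right_chains T))"
proof (induction T)
  case Leaf then show ?case by simp
next
  case (Node l x r)
  show ?case unfolding rc_Node using Node rc_sum[of "\<lambda>c. count_list c False" r] by simp
qed

lemma alt_count: "alternating c \<Longrightarrow> count_list c False =
  (if c = [] then 0 else if hd c then length c div 2 else (length c + 1) div 2)"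
proof (induction c)
  case Nil then show ?case by simp
next
  case (Cons x c)
  then have a: "alternating c" and h: "c = [] \<or> hd c \<noteq> x" using alternating_Cons by auto
  show ?case
  proof (cases "c = []")
    case True then show ?thesis by simp
  next
    case False
    then have "hd c = (\<not> x)" using h by auto
    then show ?thesis using Cons.IH[OF a] False by (cases x) auto
  qed
qed

lemma alt_count2: "alternating c \<Longrightarrow> (odd (length c) \<longrightarrow> hd c) \<Longrightarrow>
   2 * count_list c False + (if odd (length c) then 1 else 0) = length c"
  by (auto simp: alt_count)

lemma chains_count: "(\<forall>c\<in>set cs. alternating c \<and> (odd (length c) \<longrightarrow> hd c)) \<Longrightarrow>
   2 * sum_list (map (\<lambda>c. count_list c False) cs) + oddc cs = sum_list (map length cs)"
proof (induction cs)
  case Nil then show ?case by simp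
next
  case (Cons c cs)
  then have "2 * count_list c False + (if odd (length c) then 1 else 0) = length c"
    by (intro alt_count2) auto
  then show ?case using Cons by simp
qed

lemma neg_r_o: assumes "is_disk T" "goodc (right_chains T)"
  shows "2 * neg T + r_o T = size T"
  unfolding neg_chains r_o_oddc size_chains
  using assms by (intro chains_count) (auto simp: is_disk_def goodc_def)

lemma GG_DT1:
  assumes "n \<ge> 1"
  shows "GG (n - 1) = (\<Sum>k\<le>(n - 1) div 2. smult (int (card (DT1 n k))) (monom 1 k * [:1, 1:] ^ (n - 1 - 2 * k)))"
proof -
  let ?m = "n - 1"
  let ?X = "\<lambda>k. monom 1 k * [:1, 1:] ^ (n - 1 - 2 * k) :: int poly"
  have fin: "finite (DT1 n k)" for k
    by (rule finite_subset[OF _ finite_treesz[of ?m]]) (auto simp: DT1_def DT_def)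
  have gw: "g_w T = ?X k" if "T \<in> DT1 n k" "k \<le> ?m div 2" for T k
  proof -
    have d: "is_disk T" "goodc (right_chains T)" "size T = ?m" "r_o T = ?m - 2 * k"
      using that by (auto simp: DT1_def DT_def goodc_def)
    then have "neg T = k" using neg_r_o[OF d(1,2)] that(2) by simp
    then show ?thesis using d by (simp add: g_w_def PP_def)
  qed
  have "(\<Sum>k\<le>?m div 2. smult (int (card (DT1 n k))) (?X k)) = (\<Sum>k\<le>?m div 2. \<Sum>T\<in>DT1 n k. ?X k)"
    by (intro sum.cong refl) (simp add: of_nat_poly)
  also have "\<dots> = (\<Sum>k\<le>?m div 2. \<Sum>T\<in>DT1 n k. g_w T)"
    by (intro sum.cong refl) (simp add: gw)
  also have "\<dots> = (\<Sum>T\<in>(\<Union>k\<in>{..?m div 2}. DT1 n k). g_w T)"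
  proof (rule sum.UNION_disjoint[symmetric])
    show "\<forall>i\<in>{..?m div 2}. \<forall>j\<in>{..?m div 2}. i \<noteq> j \<longrightarrow> DT1 n i \<inter> DT1 n j = {}"
      by (auto simp: DT1_def)
  qed (auto simp: fin)
  also have "\<dots> = (\<Sum>T\<in>{T. size T = ?m}. g_w T)"
  proof (rule sum.mono_neutral_left)
    show "finite {T::bool tree. size T = ?m}" by (rule finite_treesz)
    show "(\<Union>k\<in>{..?m div 2}. DT1 n k) \<subseteq> {T. size T = ?m}" by (auto simp: DT1_def DT_def)
    show "\<forall>T\<in>{T. size T = ?m} - (\<Union>k\<in>{..?m div 2}. DT1 n k). g_w T = 0"
    proof
      fix T assume T: "T \<in> {T. size T = ?m} - (\<Union>k\<in>{..?m div 2}. DT1 n k)"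
      show "g_w T = 0"
      proof (rule ccontr)
        assume "g_w T \<noteq> 0"
        then have d: "is_disk T" "goodc (right_chains T)" by (auto simp: g_w_def split: if_splits)
        have e: "2 * neg T + r_o T = ?m" using neg_r_o[OF d] T by simp
        have "T \<in> DT1 n (neg T)" using d e T[THEN DiffD1] by (auto simp: DT1_def DT_def goodc_def)
        moreover have "neg T \<in> {..?m div 2}" using e by simp
        ultimately have "T \<in> (\<Union>k\<in>{..?m div 2}. DT1 n k)" by (rule UN_I[rotated])
        then show False using T by blast
      qed
    qed
  qed
  finally show ?thesis unfolding GG_def by simp
qed

lemma uniq: "(\<Sum>k\<le>m div 2. smult (c k) (monom 1 k * [:1, 1:] ^ (m - 2 * k))) = (0::int poly)
   \<Longrightarrow> \<forall>k\<le>m div 2. c k = 0"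
proof (induction m arbitrary: c rule: less_induct)
  case (less m)
  have c0: "c 0 = 0"
  proof -
    have "coeff (\<Sum>k\<le>m div 2. smult (c k) (monom 1 k * [:1, 1:] ^ (m - 2 * k))) 0 = c 0"
      by (simp add: coeff_sum coeff_monom_mult coeff_0_power sum.atMost_shift)
    then show ?thesis using less.prems by simp
  qed
  show ?case
  proof (cases "m < 2")
    case True then show ?thesis using c0 by auto
  next
    case False
    define m' where "m' = m - 2"
    have md: "m div 2 = Suc (m' div 2)" using False by (simp add: m'_def div_if)
    have "0 = (\<Sum>k\<le>m div 2. smult (c k) (monom 1 k * [:1, 1:] ^ (m - 2 * k)))" using less.prems by simp
    also have "\<dots> = (\<Sum>k\<le>m' div 2. smult (c (Suc k)) (monom 1 (Suc k) * [:1, 1:] ^ (m - 2 * Suc k)))"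
      unfolding md sum.atMost_Suc_shift using c0 by simp
    also have "\<dots> = monom 1 1 * (\<Sum>k\<le>m' div 2. smult (c (Suc k)) (monom 1 k * [:1, 1:] ^ (m' - 2 * k)))"
      unfolding sum_distrib_left
    proof (intro sum.cong refl)
      fix k
      have mm: "monom (1::int) (Suc k) = monom 1 1 * monom 1 k" by (simp add: mult_monom)
      show "smult (c (Suc k)) (monom 1 (Suc k) * [:1, 1:] ^ (m - 2 * Suc k)) =
        monom 1 1 * smult (c (Suc k)) (monom 1 k * [:1, 1:] ^ (m' - 2 * k))"
        unfolding mm by (simp add: m'_def mult.assoc)
    qed
    finally have "(\<Sum>k\<le>m' div 2. smult (c (Suc k)) (monom 1 k * [:1, 1:] ^ (m' - 2 * k))) = 0"
      by simp
    from less.IH[OF _ this] have "\<forall>k\<le>m' div 2. c (Suc k) = 0" using False by (simp add: m'_def)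
    then show ?thesis using c0 md
      by (metis Suc_le_mono not0_implies_Suc)
  qed
qed


lemma sum_shift1: "2 \<le> n \<Longrightarrow> (\<Sum>i\<in>{1..<n}. f i) = (\<Sum>i\<le>n-2. f (Suc i))"
proof -
  assume n: "2 \<le> n"
  have "{1..<n} = {Suc 0..<Suc (n - 1)}" using n by simp
  then have "(\<Sum>i\<in>{1..<n}. f i) = (\<Sum>i\<in>{0..<n-1}. f (Suc i))" by (simp only: sum.shift_bounds_Suc_ivl)
  also have "{0..<n-1} = {..n-2}" using n by auto
  finally show ?thesis .
qed

lemma link: "1 \<le> n \<Longrightarrow> SS n = AA (n - 1) \<and> SX n = (if n = 1 then 1 else 0) + DD True (n - 1)
   \<and> SY n = (if n = 1 then 1 else 0) + DD False (n - 1)"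
proof (induction n rule: less_induct)
  case (less n)
  show ?case
  proof (cases "n = 1")
    case True
    then show ?thesis using S1 by (simp add: AA_split DD_0)
  next
    case False
    then have n2: "2 \<le> n" using less.prems by simp
    define m where "m = n - 2"
    have nm: "n - 1 = Suc m" using n2 m_def by simp
    have IH: "SS (Suc i) = AA i" "SX (n - Suc i) = (if m - i = 0 then 1 else 0) + DD True (m - i)"
      "SY (n - Suc i) = (if m - i = 0 then 1 else 0) + DD False (m - i)" if "i \<le> m" for i
    proof -
      have "Suc i < n" "1 \<le> Suc i" using that m_def n2 by auto
      then show "SS (Suc i) = AA i" using less.IH[of "Suc i"] by simp
      have "n - Suc i < n" "1 \<le> n - Suc i" "n - Suc i - 1 = m - i" "(n - Suc i = 1) = (m - i = 0)"
        using that m_def n2 by auto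
      then show "SX (n - Suc i) = (if m - i = 0 then 1 else 0) + DD True (m - i)"
        "SY (n - Suc i) = (if m - i = 0 then 1 else 0) + DD False (m - i)"
        using less.IH[of "n - Suc i"] by auto
    qed
    have e1: "(if n - Suc i = 1 then 1 else 0) = (if m - i = 0 then 1 else (0::int poly))" if "i \<le> m" for i
      using that m_def n2 by auto
    have SP: "SP n = DD True (n - 1)"
    proof -
      have "SP n = (\<Sum>i\<le>m. SS (Suc i) * SY (n - Suc i))" unfolding SP_rec sum_shift1[OF n2] m_def ..
      also have "\<dots> = (\<Sum>i\<le>m. AA i * ((if m - i = 0 then 1 else 0) + DD False (m - i)))"
      proof (intro sum.cong refl)
        fix i assume "i \<in> {..m}"
        then show "SS (Suc i) * SY (n - Suc i) = AA i * ((if m - i = 0 then 1 else 0) + DD False (m - i))"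
          using IH[of i] by simp
      qed
      also have "\<dots> = DD True (n - 1)" unfolding nm DD_Suc by simp
      finally show ?thesis .
    qed
    have SM: "SM n = DD False (n - 1)"
    proof -
      have "SM n = monom 1 1 * (\<Sum>i\<le>m. SS (Suc i) * SX (n - Suc i))" unfolding SM_rec sum_shift1[OF n2] m_def ..
      also have "\<dots> = monom 1 1 * (\<Sum>i\<le>m. AA i * ((if m - i = 0 then 1 else 0) + DD True (m - i)))"
      proof (rule arg_cong[where f="(*) (monom 1 1)"], rule sum.cong[OF refl])
        fix i assume "i \<in> {..m}"
        then show "SS (Suc i) * SX (n - Suc i) = AA i * ((if m - i = 0 then 1 else 0) + DD True (m - i))"
          using IH[of i] by simp
      qed
      also have "\<dots> = DD False (n - 1)" unfolding nm DD_Suc by simp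
      finally show ?thesis .
    qed
    show ?thesis using sep_split[OF n2] SP SM False nm by (simp add: AA_split)
  qed
qed

theorem theorem3p4:
  fixes n :: nat and g :: "nat \<Rightarrow> int"
  assumes "n \<ge> 1"
    and "(\<Sum>p\<in>sep_perms n. monom (1::int) (des p)) =
         (\<Sum>k\<le>(n - 1) div 2. smult (g k) (monom 1 k * [:1, 1:] ^ (n - 1 - 2 * k)))"
  shows "\<forall>k\<le>(n - 1) div 2. g k = int (card (DT1 n k))"
proof -
  have "SS n = GG (n - 1)" using link[OF assms(1)] AA_GG by simp
  then have "(\<Sum>k\<le>(n - 1) div 2. smult (g k) (monom 1 k * [:1, 1:] ^ (n - 1 - 2 * k))) =
     (\<Sum>k\<le>(n - 1) div 2. smult (int (card (DT1 n k))) (monom 1 k * [:1, 1:] ^ (n - 1 - 2 * k)))"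
    using assms(2) GG_DT1[OF assms(1)] unfolding SS_def by simp
  then have "(\<Sum>k\<le>(n - 1) div 2. smult (g k - int (card (DT1 n k))) (monom 1 k * [:1, 1:] ^ (n - 1 - 2 * k))) = 0"
    by (simp add: smult_diff_left sum_subtractf)
  from uniq[OF this] show ?thesis by simp
qed


end
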